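(* Let $\mathcal{H}$ be a Hilbert space of finite dimension $d$, and let the set of free states be $\mathcal{F}(\mathcal{H})=\bigcup_k\mathcal{F}_k(\mathcal{H})\subseteq\mathcal{D}(\mathcal{H})$, where each $\mathcal{F}_k(\mathcal{H})$ is a closed convex set and $\mathcal{F}(\mathcal{H})$ is closed. For any resource state $\rho\in\mathcal{D}(\mathcal{H})\setminus\mathcal{F}(\mathcal{H})$, \[\inf_k\ \max_{\{p_i,\Lambda_i\}_i,\{M_i\}_i}\frac{p_{\mathrm{succ}}(\rho,\{p_i,\Lambda_i\}_i,\{M_i\}_i)}{\max_{\sigma_k\in\mathcal{F}_k(\mathcal{H})}p_{\mathrm{succ}}(\sigma_k,\{p_i,\Lambda_i\}_i,\{M_i\}_i)}=1+R_{\mathcal{F}(\mathcal{H})}(\rho).\]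
   Context: $\mathcal{D}(\mathcal{H})$ is the set of density operators on $\mathcal{H}$. A channel ensemble $\{p_i,\Lambda_i\}_i$ consists of a finite probability distribution $(p_i)_i$ and quantum channels $\Lambda_i$ from operators on $\mathcal{H}$ to operators on a common finite-dimensional output space; $\{M_i\}_i$ is a POVM on the output space; $p_{\mathrm{succ}}(\omega,\{p_i,\Lambda_i\}_i,\{M_i\}_i)=\sum_ip_i\operatorname{tr}[M_i\Lambda_i(\omega)]$. The maximum in the numerator/denominator ratio is over all channel ensembles and POVMs. The generalized robustness is $R_{\mathcal{F}(\mathcal{H})}(\rho)=\min\{s\ge0:\exists\tau\in\mathcal{D}(\mathcal{H}),\ \frac{\rho+s\tau}{1+s}\in\mathcal{F}(\mathcal{H})\}$. *)

theory Defs
  imports "Jordan_Normal_Form.Matrix" "HOL-Library.Extended_Real"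
begin

text \<open>Finite-dimensional quantum states are represented by complex d x d matrices
  (JNF matrices, dimension is a value so that output and ancilla dimensions
  can be quantified over).\<close>

definition mtrace :: "complex mat \<Rightarrow> complex" where
  "mtrace A = (\<Sum>i<dim_row A. A $$ (i, i))"

definition adj :: "complex mat \<Rightarrow> complex mat" where
  "adj A = mat (dim_col A) (dim_row A) (\<lambda>(i, j). cnj (A $$ (j, i)))"

definition hermitian :: "complex mat \<Rightarrow> bool" where
  "hermitian A \<longleftrightarrow> adj A = A"

definition psd :: "nat \<Rightarrow> complex mat \<Rightarrow> bool" where
  "psd n A \<longleftrightarrow> A \<in> carrier_mat n n \<and> hermitian A \<and>
     (\<forall>v \<in> carrier_vec n. 0 \<le> Re (conjugate v \<bullet> (A *\<^sub>v v)))"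

definition density :: "nat \<Rightarrow> complex mat set" where
  "density n = {A. psd n A \<and> mtrace A = 1}"

definition blk :: "nat \<Rightarrow> complex mat \<Rightarrow> nat \<Rightarrow> nat \<Rightarrow> complex mat" where
  "blk d X a b = mat d d (\<lambda>(i, j). X $$ (a * d + i, b * d + j))"

text \<open>The map id_k tensor Lambda, applied blockwise.\<close>
definition ampl :: "nat \<Rightarrow> nat \<Rightarrow> nat \<Rightarrow> (complex mat \<Rightarrow> complex mat) \<Rightarrow> complex mat \<Rightarrow> complex mat" where
  "ampl k d m L X = mat (k * m) (k * m)
     (\<lambda>(i, j). L (blk d X (i div m) (j div m)) $$ (i mod m, j mod m))"

definition channel :: "nat \<Rightarrow> nat \<Rightarrow> (complex mat \<Rightarrow> complex mat) \<Rightarrow> bool" where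
  "channel d m L \<longleftrightarrow>
     (\<forall>A \<in> carrier_mat d d. L A \<in> carrier_mat m m) \<and>
     (\<forall>A \<in> carrier_mat d d. \<forall>B \<in> carrier_mat d d. \<forall>c.
        L (c \<cdot>\<^sub>m A + B) = c \<cdot>\<^sub>m L A + L B) \<and>
     (\<forall>A \<in> carrier_mat d d. mtrace (L A) = mtrace A) \<and>
     (\<forall>k X. psd (k * d) X \<longrightarrow> psd (k * m) (ampl k d m L X))"

definition povm :: "nat \<Rightarrow> nat \<Rightarrow> (nat \<Rightarrow> complex mat) \<Rightarrow> bool" where
  "povm m N M \<longleftrightarrow> (\<forall>i<N. psd m (M i)) \<and>
     (\<forall>a<m. \<forall>b<m. (\<Sum>i<N. M i $$ (a, b)) = (1\<^sub>m m :: complex mat) $$ (a, b))"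

definition channel_ensemble :: "nat \<Rightarrow> nat \<Rightarrow> nat \<Rightarrow> (nat \<Rightarrow> real) \<Rightarrow> (nat \<Rightarrow> complex mat \<Rightarrow> complex mat) \<Rightarrow> bool" where
  "channel_ensemble d m N p L \<longleftrightarrow>
     (\<forall>i<N. 0 \<le> p i) \<and> (\<Sum>i<N. p i) = 1 \<and> (\<forall>i<N. channel d m (L i))"

definition p_succ :: "complex mat \<Rightarrow> nat \<Rightarrow> (nat \<Rightarrow> real) \<Rightarrow> (nat \<Rightarrow> complex mat \<Rightarrow> complex mat) \<Rightarrow> (nat \<Rightarrow> complex mat) \<Rightarrow> real" where
  "p_succ \<omega> N p L M = (\<Sum>i<N. p i * Re (mtrace (M i * L i \<omega>)))"

definition mat_closed :: "nat \<Rightarrow> complex mat set \<Rightarrow> bool" where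
  "mat_closed d S \<longleftrightarrow> (\<forall>X A. (\<forall>n. X n \<in> S) \<longrightarrow> A \<in> carrier_mat d d \<longrightarrow>
     (\<forall>i<d. \<forall>j<d. (\<lambda>n. X n $$ (i, j)) \<longlonglongrightarrow> A $$ (i, j)) \<longrightarrow> A \<in> S)"

definition mat_convex :: "complex mat set \<Rightarrow> bool" where
  "mat_convex S \<longleftrightarrow> (\<forall>A \<in> S. \<forall>B \<in> S. \<forall>t::real. 0 \<le> t \<longrightarrow> t \<le> 1 \<longrightarrow>
     complex_of_real t \<cdot>\<^sub>m A + complex_of_real (1 - t) \<cdot>\<^sub>m B \<in> S)"

text \<open>Generalized robustness; the minimum over the empty set is \<infinity>.\<close>
definition gen_robustness :: "nat \<Rightarrow> complex mat set \<Rightarrow> complex mat \<Rightarrow> ereal" where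
  "gen_robustness d F \<rho> = Inf {ereal s | s. 0 \<le> s \<and>
     (\<exists>\<tau> \<in> density d. complex_of_real (1 / (1 + s)) \<cdot>\<^sub>m (\<rho> + complex_of_real s \<cdot>\<^sub>m \<tau>) \<in> F)}"

text \<open>The ratio in the theorem for a given free set Fk (denominator: max over Fk).
  Division is in the extended reals, so x / 0 = \<infinity> for x > 0.\<close>
definition succ_ratio :: "nat \<Rightarrow> complex mat set \<Rightarrow> complex mat \<Rightarrow> ereal" where
  "succ_ratio d Fk \<rho> = Sup {ereal (p_succ \<rho> N p L M) /
        (SUP \<sigma> \<in> Fk. ereal (p_succ \<sigma> N p L M)) | N m p L M.
      channel_ensemble d m N p L \<and> povm m N M}"

end

theory Submission
  imports Defs
begin

definition qf :: "nat \<Rightarrow> (nat \<Rightarrow> nat \<Rightarrow> complex) \<Rightarrow> (nat \<Rightarrow> complex) \<Rightarrow> complex" where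
  "qf n A v = (\<Sum>i<n. \<Sum>j<n. cnj (v i) * A i j * v j)"

definition herm :: "nat \<Rightarrow> (nat \<Rightarrow> nat \<Rightarrow> complex) \<Rightarrow> bool" where
  "herm n A \<longleftrightarrow> (\<forall>i<n. \<forall>j<n. A j i = cnj (A i j))"

definition pos :: "nat \<Rightarrow> (nat \<Rightarrow> nat \<Rightarrow> complex) \<Rightarrow> bool" where
  "pos n A \<longleftrightarrow> herm n A \<and> (\<forall>v. 0 \<le> Re (qf n A v))"

definition ent :: "complex mat \<Rightarrow> nat \<Rightarrow> nat \<Rightarrow> complex" where
  "ent M i j = M $$ (i, j)"

lemma hermitian_iff:
  assumes M: "M \<in> carrier_mat n n"
  shows "hermitian M \<longleftrightarrow> herm n (ent M)"
proof
  assume "hermitian M"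
  then have e: "adj M = M" by (simp add: hermitian_def)
  show "herm n (ent M)" unfolding herm_def ent_def
  proof (intro allI impI)
    fix i j assume ij: "i < n" "j < n"
    have "M $$ (j, i) = adj M $$ (j, i)" using e by simp
    also have "\<dots> = cnj (M $$ (i, j))" using M ij by (simp add: adj_def)
    finally show "M $$ (j, i) = cnj (M $$ (i, j))" .
  qed
next
  assume h: "herm n (ent M)"
  show "hermitian M" unfolding hermitian_def
  proof (rule eq_matI)
    fix i j assume "i < dim_row M" "j < dim_col M"
    then have ij: "i < n" "j < n" using M by auto
    then have "M $$ (i, j) = cnj (M $$ (j, i))" using h[unfolded herm_def ent_def, rule_format, OF ij(2) ij(1)] by simp
    then show "adj M $$ (i, j) = M $$ (i, j)" using M ij by (simp add: adj_def)
  qed (use M in \<open>auto simp: adj_def\<close>)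
qed

lemma qf_vec:
  assumes "M \<in> carrier_mat n n" "v \<in> carrier_vec n"
  shows "conjugate v \<bullet> (M *\<^sub>v v) = qf n (ent M) (\<lambda>i. v $ i)"
proof -
  have r: "(M *\<^sub>v v) $ i = (\<Sum>j<n. M $$ (i,j) * v $ j)" if "i < n" for i
    using assms that by (simp add: scalar_prod_def atLeast0LessThan)
  show ?thesis using assms unfolding qf_def ent_def
    by (simp add: scalar_prod_def atLeast0LessThan r sum_distrib_left mult.assoc)
qed

lemma qf_cong: "(\<And>i. i < n \<Longrightarrow> v i = w i) \<Longrightarrow> qf n A v = qf n A w"
  unfolding qf_def by (auto intro!: sum.cong)

lemma psd_pos: "psd n M \<longleftrightarrow> M \<in> carrier_mat n n \<and> pos n (ent M)"
proof
  assume p: "psd n M"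
  then have M: "M \<in> carrier_mat n n" by (simp add: psd_def)
  have "0 \<le> Re (qf n (ent M) v)" for v
  proof -
    have "0 \<le> Re (conjugate (vec n v) \<bullet> (M *\<^sub>v vec n v))" using p unfolding psd_def by auto
    also have "conjugate (vec n v) \<bullet> (M *\<^sub>v vec n v) = qf n (ent M) v"
      using qf_vec[OF M, of "vec n v"] qf_cong[of n "\<lambda>i. vec n v $ i" v "ent M"] by simp
    finally show ?thesis .
  qed
  moreover have "herm n (ent M)" using p M hermitian_iff[OF M] by (simp add: psd_def)
  ultimately show "M \<in> carrier_mat n n \<and> pos n (ent M)" using M by (simp add: pos_def)
next
  assume a: "M \<in> carrier_mat n n \<and> pos n (ent M)"
  then have M: "M \<in> carrier_mat n n" by simp
  have "0 \<le> Re (conjugate v \<bullet> (M *\<^sub>v v))" if "v \<in> carrier_vec n" for v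
    using qf_vec[OF M that] a by (simp add: pos_def)
  then show "psd n M" unfolding psd_def using hermitian_iff[OF M] a by (simp add: pos_def)
qed


lemma sum_two:
  fixes n :: nat
  assumes "i \<noteq> j" "i < n" "j < n" "\<And>l. l < n \<Longrightarrow> l \<noteq> i \<Longrightarrow> l \<noteq> j \<Longrightarrow> f l = 0"
  shows "(\<Sum>l<n. f l) = f i + f j"
proof -
  have "(\<Sum>l<n. f l) = (\<Sum>l\<in>{i,j}. f l)"
    by (rule sum.mono_neutral_right) (use assms in auto)
  then show ?thesis using assms(1) by simp
qed

lemma sum_one:
  fixes n :: nat
  assumes "i < n" "\<And>l. l < n \<Longrightarrow> l \<noteq> i \<Longrightarrow> f l = 0"
  shows "(\<Sum>l<n. f l) = f i"
proof -
  have "(\<Sum>l<n. f l) = (\<Sum>l\<in>{i}. f l)"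
    by (rule sum.mono_neutral_right) (use assms in auto)
  then show ?thesis by simp
qed

lemma qf_one:
  assumes "i < n"
  shows "qf n A (\<lambda>l. if l = i then 1 else 0) = A i i"
proof -
  have "(\<Sum>b<n. cnj (if a = i then 1 else 0) * A a b * (if b = i then 1 else 0)) = (if a = i then A i i else 0)" for a
    by (subst sum_one[OF assms]) (use assms in auto)
  then show ?thesis unfolding qf_def by (simp add: sum_one[OF assms] assms)
qed

lemma herm_diag_real:
  assumes "herm n A" "i < n"
  shows "A i i = complex_of_real (Re (A i i))"
proof -
  have "A i i = cnj (A i i)" using assms unfolding herm_def by blast
  then have "Im (A i i) = 0" by (metis cnj.simps(2) neg_equal_zero)
  then show ?thesis by (simp add: complex_eq_iff)
qed

lemma pos_diag:
  assumes "pos n A" "i < n"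
  shows "0 \<le> Re (A i i)"
  using assms qf_one[OF assms(2), of A] unfolding pos_def by metis

lemma qf_two:
  assumes "i \<noteq> j" "i < n" "j < n"
  shows "qf n A (\<lambda>l. if l = i then 1 else if l = j then t else 0)
     = A i i + A i j * t + cnj t * A j i + cnj t * A j j * t"
proof -
  let ?v = "\<lambda>l. if l = i then 1 else if l = j then t else 0"
  have inner: "(\<Sum>b<n. cnj (?v a) * A a b * ?v b) = cnj (?v a) * A a i + cnj (?v a) * A a j * t" for a
    by (subst sum_two[OF assms]) (use assms in auto)
  have "qf n A ?v = (\<Sum>a<n. cnj (?v a) * A a i + cnj (?v a) * A a j * t)"
    unfolding qf_def inner ..
  also have "\<dots> = A i i + A i j * t + (cnj t * A j i + cnj t * A j j * t)"
    by (subst sum_two[OF assms]) (use assms in auto)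
  finally show ?thesis by simp
qed

lemma quad_real:
  fixes a b C :: real
  assumes "0 \<le> a" "0 \<le> b" "0 \<le> C" "\<And>x. 0 \<le> a - 2 * x * C + x\<^sup>2 * C * b"
  shows "C \<le> a * b"
proof (cases "b = 0")
  case True
  show ?thesis
  proof (rule ccontr)
    assume "\<not> C \<le> a * b"
    then have C: "C > 0" using True by simp
    have "0 \<le> a - 2 * ((a + 1) / (2 * C)) * C" using assms(4)[of "(a+1)/(2*C)"] True by simp
    also have "\<dots> = -1" using C by (simp add: field_simps)
    finally show False by simp
  qed
next
  case False
  then have b: "b > 0" using assms by simp
  have "0 \<le> a - 2 * (1/b) * C + (1/b)\<^sup>2 * C * b" using assms(4) .
  also have "\<dots> = (a * b - C) / b" using b by (simp add: field_simps power2_eq_square)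
  finally show ?thesis using b by (simp add: zero_le_divide_iff)
qed

lemma pos_offdiag:
  assumes p: "pos n A" and ij: "i < n" "j < n" "i \<noteq> j"
  shows "(cmod (A i j))\<^sup>2 \<le> Re (A i i) * Re (A j j)"
proof -
  have h: "herm n A" using p by (simp add: pos_def)
  have aji: "A j i = cnj (A i j)" using h ij unfolding herm_def by blast
  have ajj: "A j j = complex_of_real (Re (A j j))" by (rule herm_diag_real[OF h ij(2)])
  let ?C = "(cmod (A i j))\<^sup>2"
  show ?thesis
  proof (rule quad_real[OF pos_diag[OF p ij(1)] pos_diag[OF p ij(2)]])
    show "0 \<le> ?C" by simp
    fix x :: real
    let ?t = "- complex_of_real x * cnj (A i j)"
    have "0 \<le> Re (qf n A (\<lambda>l. if l = i then 1 else if l = j then ?t else 0))"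
      using p unfolding pos_def by blast
    also have "qf n A (\<lambda>l. if l = i then 1 else if l = j then ?t else 0)
       = A i i + A i j * ?t + cnj ?t * A j i + cnj ?t * A j j * ?t"
      by (rule qf_two[OF ij(3) ij(1) ij(2)])
    also have "Re \<dots> = Re (A i i) - 2 * x * ?C + x\<^sup>2 * ?C * Re (A j j)"
    proof -
      have e1: "A i j * cnj (A i j) = complex_of_real ?C" by (simp add: complex_mult_cnj cmod_def)
      have f1: "A i j * ?t = - complex_of_real (x * ?C)" using e1 by (simp add: algebra_simps)
      have f2: "cnj ?t * A j i = - complex_of_real (x * ?C)"
        unfolding aji using e1 by (simp add: algebra_simps)
      have f3: "cnj ?t * A j j * ?t = complex_of_real (x\<^sup>2 * ?C * Re (A j j))"
        using e1 by (subst ajj) (simp add: algebra_simps power2_eq_square)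
      show ?thesis unfolding f1 f2 f3 by simp
    qed
    finally show "0 \<le> Re (A i i) - 2 * x * ?C + x\<^sup>2 * ?C * Re (A j j)" .
  qed
qed


lemma qf_shift:
  fixes n :: nat
  assumes k: "k < n"
  shows "qf n A (\<lambda>i. v i + (if i = k then t else 0)) = qf n A v
     + t * (\<Sum>i<n. cnj (v i) * A i k) + cnj t * (\<Sum>j<n. A k j * v j) + cnj t * A k k * t"
proof -
  have e: "cnj (v i + (if i = k then t else 0)) * A i j * (v j + (if j = k then t else 0))
     = cnj (v i) * A i j * v j + (if j = k then t * (cnj (v i) * A i k) else 0)
       + (if i = k then cnj t * (A k j * v j) else 0)
       + (if i = k \<and> j = k then cnj t * A k k * t else 0)" for i j
    by (auto simp: algebra_simps)
  have s2: "(\<Sum>i<n. \<Sum>j<n. (if j = k then t * (cnj (v i) * A i k) else 0)) = t * (\<Sum>i<n. cnj (v i) * A i k)"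
    using k by (simp add: sum_distrib_left)
  have s3: "(\<Sum>i<n. \<Sum>j<n. (if i = k then cnj t * (A k j * v j) else 0)) = cnj t * (\<Sum>j<n. A k j * v j)"
  proof -
    have "(\<Sum>j<n. (if i = k then cnj t * (A k j * v j) else 0)) = (if i = k then cnj t * (\<Sum>j<n. A k j * v j) else 0)" for i
      by (simp add: sum_distrib_left)
    then show ?thesis using k by simp
  qed
  have s4: "(\<Sum>i<n. \<Sum>j<n. (if i = k \<and> j = k then cnj t * A k k * t else 0)) = cnj t * A k k * t"
  proof -
    have "(\<Sum>j<n. (if i = k \<and> j = k then cnj t * A k k * t else 0)) = (if i = k then cnj t * A k k * t else 0)" for i
      using k by (cases "i = k") auto
    then show ?thesis using k by simp
  qed
  show ?thesis unfolding qf_def e sum.distrib s2 s3 s4 ..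
qed


lemma herm_sym: "herm n A \<Longrightarrow> i < n \<Longrightarrow> j < n \<Longrightarrow> A j i = cnj (A i j)"
  unfolding herm_def by blast

lemma decomp:
  fixes n :: nat
  shows "k \<le> n \<Longrightarrow> pos n A \<Longrightarrow> (\<forall>i<n. \<forall>j<n. (i < k \<or> j < k) \<longrightarrow> A i j = 0)
    \<Longrightarrow> \<exists>u. \<forall>i<n. \<forall>j<n. A i j = (\<Sum>l\<in>{k..<n}. u l i * cnj (u l j))"
proof (induction "n - k" arbitrary: k A)
  case 0
  then have "k = n" by simp
  then show ?case using 0 by auto
next
  case (Suc m)
  have kn: "k < n" and m: "m = n - Suc k" using Suc.hyps(2) by auto
  have p: "pos n A" and z: "\<forall>i<n. \<forall>j<n. (i < k \<or> j < k) \<longrightarrow> A i j = 0" using Suc.prems by auto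
  have h: "herm n A" using p by (simp add: pos_def)
  define a where "a = Re (A k k)"
  have akk: "A k k = complex_of_real a" unfolding a_def by (rule herm_diag_real[OF h kn])
  have a0: "0 \<le> a" unfolding a_def by (rule pos_diag[OF p kn])
  have split: "(\<Sum>l\<in>{k..<n}. f l) = f k + (\<Sum>l\<in>{Suc k..<n}. f l)" for f :: "nat \<Rightarrow> complex"
    using kn by (simp add: sum.atLeast_Suc_lessThan)
  show ?case
  proof (cases "a = 0")
    case True
    have row: "A k j = 0" if j: "j < n" for j
    proof (cases "j = k")
      case True then show ?thesis using akk \<open>a = 0\<close> by simp
    next
      case False
      have "(cmod (A k j))\<^sup>2 \<le> Re (A k k) * Re (A j j)" by (rule pos_offdiag[OF p kn j False[symmetric]])
      then have "(cmod (A k j))\<^sup>2 \<le> 0" using \<open>a = 0\<close> by (simp add: a_def)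
      then show ?thesis by simp
    qed
    have col: "A j k = 0" if j: "j < n" for j
      using herm_sym[OF h kn j] row[OF j] by simp
    have z': "\<forall>i<n. \<forall>j<n. (i < Suc k \<or> j < Suc k) \<longrightarrow> A i j = 0"
      using z row col less_Suc_eq by auto
    obtain u where u: "\<forall>i<n. \<forall>j<n. A i j = (\<Sum>l\<in>{Suc k..<n}. u l i * cnj (u l j))"
      using Suc.hyps(1)[OF m _ p z'] kn by auto
    let ?u = "u(k := (\<lambda>_. 0))"
    have "(\<Sum>l\<in>{Suc k..<n}. ?u l i * cnj (?u l j)) = (\<Sum>l\<in>{Suc k..<n}. u l i * cnj (u l j))" for i j
      by (rule sum.cong) auto
    then have "\<forall>i<n. \<forall>j<n. A i j = (\<Sum>l\<in>{k..<n}. ?u l i * cnj (?u l j))"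
      using u by (simp add: split)
    then show ?thesis by blast
  next
    case False
    then have apos: "a > 0" using a0 by simp
    define c where "c i = A i k" for i
    define B where "B i j = A i j - c i * cnj (c j) / complex_of_real a" for i j
    have ca: "complex_of_real a \<noteq> 0" using apos by simp
    have hB: "herm n B" unfolding herm_def
    proof (intro allI impI)
      fix i j assume ij: "i < n" "j < n"
      show "B j i = cnj (B i j)" unfolding B_def using herm_sym[OF h ij] by simp
    qed
    have qB: "0 \<le> Re (qf n B v)" for v
    proof -
      define y where "y = (\<Sum>i<n. cnj (v i) * c i)"
      have cy: "cnj y = (\<Sum>j<n. cnj (c j) * v j)" unfolding y_def by (simp add: mult.commute)
      have rowk: "(\<Sum>j<n. A k j * v j) = cnj y"
        unfolding cy c_def using herm_sym[OF h kn] by (intro sum.cong) auto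
      have "qf n B v = qf n A v - (\<Sum>i<n. \<Sum>j<n. (cnj (v i) * c i) * (cnj (c j) * v j)) / complex_of_real a"
        unfolding qf_def B_def by (simp add: algebra_simps sum_subtractf sum_divide_distrib)
      also have "(\<Sum>i<n. \<Sum>j<n. (cnj (v i) * c i) * (cnj (c j) * v j)) = y * cnj y"
        unfolding cy unfolding y_def sum_product by (rule refl)
      finally have qB: "qf n B v = qf n A v - y * cnj y / complex_of_real a" .
      let ?t = "- cnj y / complex_of_real a"
      have "qf n A (\<lambda>i. v i + (if i = k then ?t else 0)) = qf n A v + ?t * y + cnj ?t * cnj y + cnj ?t * complex_of_real a * ?t"
        using qf_shift[OF kn, of A v ?t] rowk akk unfolding y_def c_def by simp
      also have "\<dots> = qf n B v" unfolding qB using ca by (simp add: field_simps)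
      finally have "qf n B v = qf n A (\<lambda>i. v i + (if i = k then ?t else 0))" by simp
      then show ?thesis using p unfolding pos_def by simp
    qed
    have pB: "pos n B" using hB qB by (simp add: pos_def)
    have zB: "\<forall>i<n. \<forall>j<n. (i < Suc k \<or> j < Suc k) \<longrightarrow> B i j = 0"
    proof (intro allI impI)
      fix i j assume ij: "i < n" "j < n" and "i < Suc k \<or> j < Suc k"
      then consider "i < k" | "j < k" | "i = k" | "j = k" by linarith
      then show "B i j = 0"
      proof cases
        case 1 then show ?thesis using z ij kn unfolding B_def c_def by simp
      next
        case 2 then show ?thesis using z ij kn unfolding B_def c_def by simp
      next
        case 3 then show ?thesis unfolding B_def c_def using akk ca herm_sym[OF h ij(2) kn] by simp
      next
        case 4 then show ?thesis unfolding B_def c_def using akk ca by simp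
      qed
    qed
    obtain u where u: "\<forall>i<n. \<forall>j<n. B i j = (\<Sum>l\<in>{Suc k..<n}. u l i * cnj (u l j))"
      using Suc.hyps(1)[OF m _ pB zB] kn by auto
    let ?u = "u(k := (\<lambda>i. c i / complex_of_real (sqrt a)))"
    have s1: "(\<Sum>l\<in>{Suc k..<n}. ?u l i * cnj (?u l j)) = (\<Sum>l\<in>{Suc k..<n}. u l i * cnj (u l j))" for i j
      by (rule sum.cong) auto
    have s2: "?u k i * cnj (?u k j) = c i * cnj (c j) / complex_of_real a" for i j
    proof -
      have "complex_of_real (sqrt a) * complex_of_real (sqrt a) = complex_of_real a"
      proof -
        have "sqrt a * sqrt a = a" using a0 by simp
        then show ?thesis by (simp flip: of_real_mult)
      qed
      then show ?thesis by (simp add: field_simps)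
    qed
    have "\<forall>i<n. \<forall>j<n. A i j = (\<Sum>l\<in>{k..<n}. ?u l i * cnj (?u l j))"
    proof (intro allI impI)
      fix i j assume ij: "i < n" "j < n"
      have "A i j = c i * cnj (c j) / complex_of_real a + B i j" unfolding B_def by simp
      also have "\<dots> = (\<Sum>l\<in>{k..<n}. ?u l i * cnj (?u l j))"
        unfolding split s1 s2 using u ij by simp
      finally show "A i j = (\<Sum>l\<in>{k..<n}. ?u l i * cnj (?u l j))" .
    qed
    then show ?thesis by blast
  qed
qed

lemma pos_decomp:
  fixes n :: nat
  assumes "pos n A"
  shows "\<exists>u. \<forall>i<n. \<forall>j<n. A i j = (\<Sum>l<n. u l i * cnj (u l j))"
  using decomp[of 0 n A] assms by (simp add: atLeast0LessThan)

lemma self_dual: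
  fixes n :: nat
  assumes A: "pos n A" and B: "pos n B"
  shows "0 \<le> Re (\<Sum>i<n. \<Sum>j<n. A i j * B j i)"
proof -
  obtain u where u: "\<forall>i<n. \<forall>j<n. B i j = (\<Sum>l<n. u l i * cnj (u l j))"
    using pos_decomp[OF B] by blast
  have "(\<Sum>i<n. \<Sum>j<n. A i j * B j i) = (\<Sum>i<n. \<Sum>j<n. \<Sum>l<n. cnj (u l i) * A i j * u l j)"
    using u by (simp add: sum_distrib_left algebra_simps)
  also have "\<dots> = (\<Sum>i<n. \<Sum>l<n. \<Sum>j<n. cnj (u l i) * A i j * u l j)"
    by (rule sum.cong[OF refl], rule sum.swap)
  also have "\<dots> = (\<Sum>l<n. \<Sum>i<n. \<Sum>j<n. cnj (u l i) * A i j * u l j)"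
    by (rule sum.swap)
  also have "\<dots> = (\<Sum>l<n. qf n A (u l))"
    unfolding qf_def ..
  finally have e: "(\<Sum>i<n. \<Sum>j<n. A i j * B j i) = (\<Sum>l<n. qf n A (u l))" .
  have "0 \<le> (\<Sum>l<n. Re (qf n A (u l)))" using A by (intro sum_nonneg) (simp add: pos_def)
  then show ?thesis unfolding e by (simp add: Re_sum)
qed


lemma mtrace_mult:
  assumes "A \<in> carrier_mat n n" "B \<in> carrier_mat n n"
  shows "mtrace (A * B) = (\<Sum>i<n. \<Sum>j<n. A $$ (i, j) * B $$ (j, i))"
  using assms unfolding mtrace_def by (simp add: scalar_prod_def atLeast0LessThan)

lemma psd_trace_mult:
  assumes "psd n A" "psd n B"
  shows "0 \<le> Re (mtrace (A * B))"
proof -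
  have A: "A \<in> carrier_mat n n" "pos n (ent A)" and B: "B \<in> carrier_mat n n" "pos n (ent B)"
    using assms psd_pos by auto
  show ?thesis using self_dual[OF A(2) B(2)] unfolding mtrace_mult[OF A(1) B(1)] ent_def .
qed

lemma blk_id: "X \<in> carrier_mat d d \<Longrightarrow> blk d X 0 0 = X"
  unfolding blk_def by (rule eq_matI) auto

lemma channel_carrier: "channel d m L \<Longrightarrow> A \<in> carrier_mat d d \<Longrightarrow> L A \<in> carrier_mat m m"
  unfolding channel_def by blast

lemma channel_psd:
  assumes L: "channel d m L" and X: "psd d X"
  shows "psd m (L X)"
proof -
  have Xc: "X \<in> carrier_mat d d" using X by (simp add: psd_def)
  have "\<forall>k X. psd (k * d) X \<longrightarrow> psd (k * m) (ampl k d m L X)" using L unfolding channel_def by blast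
  then have "psd (1 * d) X \<longrightarrow> psd (1 * m) (ampl 1 d m L X)" by blast
  then have "psd (1 * m) (ampl 1 d m L X)" using X by simp
  moreover have "ampl 1 d m L X = L X"
    unfolding ampl_def
    by (rule eq_matI) (use channel_carrier[OF L Xc] blk_id[OF Xc] in auto)
  ultimately show ?thesis by simp
qed

lemma channel_lin:
  assumes L: "channel d m L" "A \<in> carrier_mat d d" "B \<in> carrier_mat d d"
  shows "L (c \<cdot>\<^sub>m A + B) = c \<cdot>\<^sub>m L A + L B"
  using assms unfolding channel_def by blast

lemma channel_zero:
  assumes L: "channel d m L" and ab: "a < m" "b < m"
  shows "L (0\<^sub>m d d) $$ (a, b) = 0"
proof -
  have z: "0\<^sub>m d d \<in> carrier_mat d d" by simp
  have "1 \<cdot>\<^sub>m 0\<^sub>m d d + 0\<^sub>m d d = (0\<^sub>m d d :: complex mat)" by (rule eq_matI) auto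
  then have "L (0\<^sub>m d d) = 1 \<cdot>\<^sub>m L (0\<^sub>m d d) + L (0\<^sub>m d d)"
    using channel_lin[OF L z z, of 1] by simp
  then have "L (0\<^sub>m d d) $$ (a, b) = (1 \<cdot>\<^sub>m L (0\<^sub>m d d) + L (0\<^sub>m d d)) $$ (a, b)" by simp
  also have "\<dots> = L (0\<^sub>m d d) $$ (a, b) + L (0\<^sub>m d d) $$ (a, b)"
    using channel_carrier[OF L z] ab by simp
  finally show ?thesis by simp
qed

lemma channel_mix:
  assumes L: "channel d m L" and r: "\<rho> \<in> carrier_mat d d" and t: "\<tau> \<in> carrier_mat d d"
    and ab: "a < m" "b < m"
  shows "L (complex_of_real c \<cdot>\<^sub>m (\<rho> + complex_of_real s \<cdot>\<^sub>m \<tau>)) $$ (a, b)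
     = complex_of_real c * (complex_of_real s * L \<tau> $$ (a, b) + L \<rho> $$ (a, b))"
proof -
  let ?Q = "\<rho> + complex_of_real s \<cdot>\<^sub>m \<tau>"
  have Q: "?Q \<in> carrier_mat d d" using r t by simp
  have z: "0\<^sub>m d d \<in> carrier_mat d d" by simp
  have e1: "complex_of_real c \<cdot>\<^sub>m ?Q = complex_of_real c \<cdot>\<^sub>m ?Q + 0\<^sub>m d d" using Q by simp
  have e2: "?Q = complex_of_real s \<cdot>\<^sub>m \<tau> + \<rho>" by (rule comm_add_mat) (use r t in auto)
  have "L (complex_of_real c \<cdot>\<^sub>m ?Q) = complex_of_real c \<cdot>\<^sub>m L ?Q + L (0\<^sub>m d d)"
    by (subst e1, rule channel_lin[OF L Q z])
  moreover have "L ?Q = complex_of_real s \<cdot>\<^sub>m L \<tau> + L \<rho>"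
    by (subst e2, rule channel_lin[OF L t r])
  ultimately show ?thesis
    using channel_carrier[OF L r] channel_carrier[OF L t] channel_carrier[OF L Q] channel_carrier[OF L z] channel_zero[OF L ab] ab
    by simp
qed

lemma density_carrier: "\<rho> \<in> density d \<Longrightarrow> \<rho> \<in> carrier_mat d d"
  unfolding density_def psd_def by simp

lemma density_psd: "\<rho> \<in> density d \<Longrightarrow> psd d \<rho>"
  unfolding density_def by simp

lemma povm_psd: "povm m N M \<Longrightarrow> i < N \<Longrightarrow> psd m (M i)"
  unfolding povm_def by blast

lemma psucc_nonneg:
  assumes ens: "channel_ensemble d m N p L" and P: "povm m N M" and w: "psd d \<omega>"
  shows "0 \<le> p_succ \<omega> N p L M"
  unfolding p_succ_def
proof (rule sum_nonneg)
  fix i assume "i \<in> {..<N}"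
  then have i: "i < N" by simp
  have "channel d m (L i)" "0 \<le> p i" using ens i unfolding channel_ensemble_def by auto
  then show "0 \<le> p i * Re (mtrace (M i * L i \<omega>))"
    using psd_trace_mult[OF povm_psd[OF P i] channel_psd[OF _ w]] by simp
qed

lemma psucc_bound:
  assumes ens: "channel_ensemble d m N p L" and P: "povm m N M"
    and r: "\<rho> \<in> density d" and ta: "\<tau> \<in> density d" and t: "0 \<le> t"
  shows "p_succ \<rho> N p L M \<le> (1 + t) * p_succ (complex_of_real (1 / (1 + t)) \<cdot>\<^sub>m (\<rho> + complex_of_real t \<cdot>\<^sub>m \<tau>)) N p L M"
proof -
  let ?\<sigma> = "complex_of_real (1 / (1 + t)) \<cdot>\<^sub>m (\<rho> + complex_of_real t \<cdot>\<^sub>m \<tau>)"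
  have rc: "\<rho> \<in> carrier_mat d d" and tc: "\<tau> \<in> carrier_mat d d" using r ta density_carrier by auto
  have sc: "?\<sigma> \<in> carrier_mat d d" using rc tc by simp
  have each: "Re (mtrace (M i * L i \<rho>)) \<le> (1 + t) * Re (mtrace (M i * L i ?\<sigma>))" if i: "i < N" for i
  proof -
    have L: "channel d m (L i)" using ens i unfolding channel_ensemble_def by auto
    have Mc: "M i \<in> carrier_mat m m" using povm_psd[OF P i] by (simp add: psd_def)
    have Lr: "L i \<rho> \<in> carrier_mat m m" "L i \<tau> \<in> carrier_mat m m" "L i ?\<sigma> \<in> carrier_mat m m"
      using channel_carrier[OF L] rc tc sc by auto
    have ent: "L i \<rho> $$ (b, a) = complex_of_real (1 + t) * L i ?\<sigma> $$ (b, a) - complex_of_real t * L i \<tau> $$ (b, a)"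
      if "a < m" "b < m" for a b
    proof -
      have "L i ?\<sigma> $$ (b, a) = complex_of_real (1 / (1 + t)) * (complex_of_real t * L i \<tau> $$ (b, a) + L i \<rho> $$ (b, a))"
        by (rule channel_mix[OF L rc tc that(2) that(1)])
      moreover have "complex_of_real (1 + t) \<noteq> 0" using t by (simp add: complex_eq_iff)
      ultimately show ?thesis using t by (simp add: field_simps)
    qed
    have "mtrace (M i * L i \<rho>) = complex_of_real (1 + t) * mtrace (M i * L i ?\<sigma>) - complex_of_real t * mtrace (M i * L i \<tau>)"
      unfolding mtrace_mult[OF Mc Lr(1)] mtrace_mult[OF Mc Lr(2)] mtrace_mult[OF Mc Lr(3)]
      by (simp add: ent algebra_simps sum_distrib_left sum_subtractf)
    then have "Re (mtrace (M i * L i \<rho>)) = (1 + t) * Re (mtrace (M i * L i ?\<sigma>)) - t * Re (mtrace (M i * L i \<tau>))"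
      by simp
    moreover have "0 \<le> Re (mtrace (M i * L i \<tau>))"
      by (rule psd_trace_mult[OF povm_psd[OF P i] channel_psd[OF L density_psd[OF ta]]])
    ultimately show ?thesis using t by (simp add: mult_nonneg_nonneg)
  qed
  have "p_succ \<rho> N p L M \<le> (\<Sum>i<N. p i * ((1 + t) * Re (mtrace (M i * L i ?\<sigma>))))"
    unfolding p_succ_def
    by (rule sum_mono) (use each ens in \<open>auto simp: channel_ensemble_def intro: mult_left_mono\<close>)
  also have "\<dots> = (1 + t) * p_succ ?\<sigma> N p L M"
    unfolding p_succ_def by (simp add: sum_distrib_left algebra_simps)
  finally show ?thesis .
qed


lemma ratio_le:
  fixes a c :: real and D :: ereal
  assumes a: "0 \<le> a" and D: "0 \<le> D" and le: "ereal a \<le> ereal c * D" and c: "0 \<le> c"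
  shows "ereal a / D \<le> ereal c"
proof (cases D)
  case (real r)
  then have r: "0 \<le> r" using D by simp
  show ?thesis
  proof (cases "r = 0")
    case True
    then have "a = 0" using le a real by simp
    then show ?thesis using True real c by simp
  next
    case False
    then have "a \<le> c * r" "r > 0" using le real r by auto
    then have "a / r \<le> c" by (simp add: divide_le_eq mult.commute)
    then show ?thesis using real False by simp
  qed
next
  case PInf then show ?thesis using c by simp
next
  case MInf then show ?thesis using D by simp
qed

lemma ratio_ge:
  fixes a c :: real and D :: ereal
  assumes a: "0 < a" and D: "0 \<le> D" and le: "ereal c * D \<le> ereal a" and c: "0 \<le> c"
  shows "ereal c \<le> ereal a / D"
proof (cases D)
  case (real r)
  then have r: "0 \<le> r" using D by simp
  show ?thesis
  proof (cases "r = 0")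
    case True
    then show ?thesis using real a by simp
  next
    case False
    then have "c * r \<le> a" "r > 0" using le real r by auto
    then have "c \<le> a / r" by (simp add: le_divide_eq)
    then show ?thesis using real False by simp
  qed
next
  case PInf
  then have "c = 0" using le c by (cases "c = 0") auto
  then show ?thesis using PInf by simp
next
  case MInf then show ?thesis using D by simp
qed

lemma sr_upper:
  assumes sub: "Fk \<subseteq> density d" and r: "\<rho> \<in> density d" and t: "0 \<le> t" and ta: "\<tau> \<in> density d"
    and s: "complex_of_real (1 / (1 + t)) \<cdot>\<^sub>m (\<rho> + complex_of_real t \<cdot>\<^sub>m \<tau>) \<in> Fk"
  shows "succ_ratio d Fk \<rho> \<le> ereal (1 + t)"
  unfolding succ_ratio_def
proof (rule Sup_least)
  fix x assume "x \<in> {ereal (p_succ \<rho> N p L M) / (SUP \<sigma> \<in> Fk. ereal (p_succ \<sigma> N p L M)) | N m p L M.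
      channel_ensemble d m N p L \<and> povm m N M}"
  then obtain N m p L M where x: "x = ereal (p_succ \<rho> N p L M) / (SUP \<sigma> \<in> Fk. ereal (p_succ \<sigma> N p L M))"
    and ens: "channel_ensemble d m N p L" and P: "povm m N M" by blast
  let ?\<sigma> = "complex_of_real (1 / (1 + t)) \<cdot>\<^sub>m (\<rho> + complex_of_real t \<cdot>\<^sub>m \<tau>)"
  let ?D = "SUP \<sigma> \<in> Fk. ereal (p_succ \<sigma> N p L M)"
  have Dge: "ereal (p_succ ?\<sigma> N p L M) \<le> ?D" using s by (rule SUP_upper)
  have s0: "0 \<le> p_succ ?\<sigma> N p L M" using psucc_nonneg[OF ens P density_psd] s sub by blast
  have D0: "0 \<le> ?D" using Dge s0 by (meson ereal_less_eq(5) order_trans)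
  have "ereal (p_succ \<rho> N p L M) \<le> ereal ((1 + t) * p_succ ?\<sigma> N p L M)"
    using psucc_bound[OF ens P r ta t] by simp
  also have "\<dots> = ereal (1 + t) * ereal (p_succ ?\<sigma> N p L M)" by simp
  also have "\<dots> \<le> ereal (1 + t) * ?D" using Dge t by (intro ereal_mult_left_mono) auto
  finally show "x \<le> ereal (1 + t)" unfolding x
    using ratio_le[OF psucc_nonneg[OF ens P density_psd[OF r]] D0] t by simp
qed

lemma sr_le_R:
  assumes sub: "Fk \<subseteq> density d" and r: "\<rho> \<in> density d"
  shows "succ_ratio d Fk \<rho> \<le> 1 + gen_robustness d Fk \<rho>"
proof -
  let ?T = "{ereal s | s. 0 \<le> s \<and> (\<exists>\<tau> \<in> density d. complex_of_real (1 / (1 + s)) \<cdot>\<^sub>m (\<rho> + complex_of_real s \<cdot>\<^sub>m \<tau>) \<in> Fk)}"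
  have g: "gen_robustness d Fk \<rho> = Inf ?T" unfolding gen_robustness_def ..
  show ?thesis
  proof (cases "?T = {}")
    case True
    show ?thesis unfolding g True Inf_empty by (simp add: top_ereal_def)
  next
    case False
    have e: "(INF x\<in>?T. 1 + x) = 1 + (INF x\<in>?T. x)"
      by (rule INF_ereal_add_right) (use False in auto)
    have "1 + Inf ?T = (INF x\<in>?T. 1 + x)" unfolding e by simp
    also have "succ_ratio d Fk \<rho> \<le> (INF x\<in>?T. 1 + x)"
    proof (rule INF_greatest)
      fix x assume "x \<in> ?T"
      then obtain t \<tau> where x: "x = ereal t" and t: "0 \<le> t" and ta: "\<tau> \<in> density d"
        and s: "complex_of_real (1 / (1 + t)) \<cdot>\<^sub>m (\<rho> + complex_of_real t \<cdot>\<^sub>m \<tau>) \<in> Fk" by blast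
      show "succ_ratio d Fk \<rho> \<le> 1 + x" using sr_upper[OF sub r t ta s] x by (simp add: add.commute)
    qed
    ultimately show ?thesis unfolding g by simp
  qed
qed


lemma density_bound:
  assumes r: "\<sigma> \<in> density d" and ij: "i < d" "j < d"
  shows "cmod (\<sigma> $$ (i, j)) \<le> 1"
proof -
  have c: "\<sigma> \<in> carrier_mat d d" and p: "pos d (ent \<sigma>)" and tr: "mtrace \<sigma> = 1"
    using r psd_pos unfolding density_def by auto
  have h: "herm d (ent \<sigma>)" using p by (simp add: pos_def)
  have dg: "Re (\<sigma> $$ (l, l)) \<le> 1" if l: "l < d" for l
  proof -
    have "(\<Sum>k<d. Re (\<sigma> $$ (k, k))) = 1" using tr c unfolding mtrace_def by (simp add: Re_sum[symmetric])
    moreover have "Re (\<sigma> $$ (l, l)) \<le> (\<Sum>k<d. Re (\<sigma> $$ (k, k)))"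
      by (rule member_le_sum) (use l pos_diag[OF p] in \<open>auto simp: ent_def\<close>)
    ultimately show ?thesis by simp
  qed
  have dg2: "cmod (\<sigma> $$ (l, l)) \<le> 1" if l: "l < d" for l
  proof -
    have "\<sigma> $$ (l, l) = complex_of_real (Re (\<sigma> $$ (l, l)))"
      using herm_diag_real[OF h l] by (simp add: ent_def)
    then have "cmod (\<sigma> $$ (l, l)) = \<bar>Re (\<sigma> $$ (l, l))\<bar>" by (metis norm_of_real)
    then show ?thesis using dg[OF l] pos_diag[OF p l] by (simp add: ent_def)
  qed
  show ?thesis
  proof (cases "i = j")
    case True then show ?thesis using dg2 ij by simp
  next
    case False
    have "(cmod (\<sigma> $$ (i, j)))\<^sup>2 \<le> Re (\<sigma> $$ (i, i)) * Re (\<sigma> $$ (j, j))"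
      using pos_offdiag[OF p ij False] by (simp add: ent_def)
    also have "\<dots> \<le> 1 * 1"
      using dg ij pos_diag[OF p] by (intro mult_mono) (auto simp: ent_def)
    finally have "(cmod (\<sigma> $$ (i, j)))\<^sup>2 \<le> 1" by simp
    then show ?thesis using power2_le_imp_le[of "cmod (\<sigma> $$ (i, j))" 1] by simp
  qed
qed

lemma psd_comb:
  assumes A: "psd d A" and B: "psd d B" and a: "0 \<le> a" and b: "0 \<le> b"
  shows "psd d (complex_of_real a \<cdot>\<^sub>m A + complex_of_real b \<cdot>\<^sub>m B)"
proof -
  have Ac: "A \<in> carrier_mat d d" and pA: "pos d (ent A)" and Bc: "B \<in> carrier_mat d d" and pB: "pos d (ent B)"
    using A B psd_pos by auto
  let ?C = "complex_of_real a \<cdot>\<^sub>m A + complex_of_real b \<cdot>\<^sub>m B"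
  have Cc: "?C \<in> carrier_mat d d" using Ac Bc by simp
  have ent: "ent ?C i j = complex_of_real a * ent A i j + complex_of_real b * ent B i j" if "i < d" "j < d" for i j
    using that Ac Bc by (simp add: ent_def)
  have hA: "herm d (ent A)" and hB: "herm d (ent B)" using pA pB by (auto simp: pos_def)
  have h: "herm d (ent ?C)" unfolding herm_def
  proof (intro allI impI)
    fix i j assume ij: "i < d" "j < d"
    show "ent ?C j i = cnj (ent ?C i j)" using ent ij herm_sym[OF hA ij] herm_sym[OF hB ij] by simp
  qed
  have "qf d (ent ?C) v = complex_of_real a * qf d (ent A) v + complex_of_real b * qf d (ent B) v" for v
  proof -
    have "qf d (ent ?C) v = (\<Sum>i<d. \<Sum>j<d. cnj (v i) * (complex_of_real a * ent A i j + complex_of_real b * ent B i j) * v j)"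
      unfolding qf_def by (intro sum.cong refl) (simp add: ent)
    also have "\<dots> = complex_of_real a * qf d (ent A) v + complex_of_real b * qf d (ent B) v"
      unfolding qf_def by (simp add: algebra_simps sum.distrib sum_distrib_left)
    finally show ?thesis .
  qed
  then have "0 \<le> Re (qf d (ent ?C) v)" for v
    using pA pB a b unfolding pos_def by simp
  then show ?thesis using psd_pos Cc h by (simp add: pos_def)
qed

lemma psd_add:
  assumes A: "psd d A" and B: "psd d B"
  shows "psd d (A + B)"
proof -
  have Ac: "A \<in> carrier_mat d d" and Bc: "B \<in> carrier_mat d d" using A B by (auto simp: psd_def)
  have "A + B = complex_of_real 1 \<cdot>\<^sub>m A + complex_of_real 1 \<cdot>\<^sub>m B"
    by (rule eq_matI) (use Ac Bc in auto)
  then show ?thesis using psd_comb[OF A B, of 1 1] by simp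
qed

lemma psd_zero: "psd d (0\<^sub>m d d)"
proof -
  have "pos d (ent (0\<^sub>m d d))" unfolding pos_def herm_def qf_def ent_def by simp
  then show ?thesis using psd_pos by simp
qed

definition rank1 :: "nat \<Rightarrow> (nat \<Rightarrow> complex) \<Rightarrow> complex mat" where
  "rank1 d v = mat d d (\<lambda>(i, j). v i * cnj (v j))"

lemma psd_rank1: "psd d (rank1 d v)"
proof -
  have c: "rank1 d v \<in> carrier_mat d d" unfolding rank1_def by simp
  have h: "herm d (ent (rank1 d v))" unfolding herm_def ent_def rank1_def by simp
  have qfw: "qf d (ent (rank1 d v)) w = (\<Sum>i<d. cnj (w i) * v i) * cnj (\<Sum>i<d. cnj (w i) * v i)" for w
  proof -
    have "qf d (ent (rank1 d v)) w = (\<Sum>i<d. \<Sum>j<d. (cnj (w i) * v i) * (cnj (v j) * w j))"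
      unfolding qf_def ent_def rank1_def by (intro sum.cong refl) (simp add: algebra_simps)
    also have "\<dots> = (\<Sum>i<d. cnj (w i) * v i) * (\<Sum>j<d. cnj (v j) * w j)"
      unfolding sum_product ..
    also have "(\<Sum>j<d. cnj (v j) * w j) = cnj (\<Sum>i<d. cnj (w i) * v i)"
      by (simp add: ac_simps)
    finally show ?thesis .
  qed
  have "0 \<le> Re (qf d (ent (rank1 d v)) w)" for w
    unfolding qfw complex_mult_cnj Re_complex_of_real by simp
  then show ?thesis using psd_pos c h by (simp add: pos_def)
qed

lemma psd_closed:
  assumes X: "\<And>n. psd d (X n)" and A: "A \<in> carrier_mat d d"
    and lim: "\<And>i j. i < d \<Longrightarrow> j < d \<Longrightarrow> (\<lambda>n. X n $$ (i, j)) \<longlonglongrightarrow> A $$ (i, j)"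
  shows "psd d A"
proof -
  have pX: "pos d (ent (X n))" for n using X psd_pos by blast
  have h: "herm d (ent A)" unfolding herm_def
  proof (intro allI impI)
    fix i j assume ij: "i < d" "j < d"
    have hn: "herm d (ent (X n))" for n using pX by (simp add: pos_def)
    have "ent (X n) j i = cnj (ent (X n) i j)" for n by (rule herm_sym[OF hn ij])
    then have "(\<lambda>n. X n $$ (j, i)) = (\<lambda>n. cnj (X n $$ (i, j)))" unfolding ent_def by (rule ext)
    moreover have "(\<lambda>n. cnj (X n $$ (i, j))) \<longlonglongrightarrow> cnj (A $$ (i, j))"
      by (rule tendsto_cnj[OF lim[OF ij]])
    ultimately have "(\<lambda>n. X n $$ (j, i)) \<longlonglongrightarrow> cnj (A $$ (i, j))" by simp
    then show "ent A j i = cnj (ent A i j)" unfolding ent_def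
      using lim[OF ij(2) ij(1)] LIMSEQ_unique by blast
  qed
  have "0 \<le> Re (qf d (ent A) v)" for v
  proof -
    have "(\<lambda>n. Re (qf d (ent (X n)) v)) \<longlonglongrightarrow> Re (qf d (ent A) v)"
      unfolding qf_def ent_def
      by (intro tendsto_Re tendsto_sum tendsto_mult tendsto_const lim) auto
    moreover have "\<forall>n. 0 \<le> Re (qf d (ent (X n)) v)" using pX unfolding pos_def by blast
    ultimately show ?thesis by (meson LIMSEQ_le_const)
  qed
  then show ?thesis using psd_pos A h by (simp add: pos_def)
qed

lemma BW_fin:
  fixes x :: "nat \<Rightarrow> 'i \<Rightarrow> real"
  assumes "finite I" "\<And>n i. i \<in> I \<Longrightarrow> \<bar>x n i\<bar> \<le> B"
  shows "\<exists>r. strict_mono r \<and> (\<forall>i\<in>I. convergent (\<lambda>n. x (r n) i))"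
  using assms
proof (induction I rule: finite_induct)
  case empty
  show ?case by (rule exI[of _ id]) (simp add: strict_mono_def)
next
  case (insert a I)
  obtain r where r: "strict_mono r" "\<forall>i\<in>I. convergent (\<lambda>n. x (r n) i)"
    using insert by auto
  obtain r2 where r2: "strict_mono r2" "monoseq (\<lambda>n. x (r (r2 n)) a)"
    using seq_monosub[of "\<lambda>n. x (r n) a"] by blast
  have "Bseq (\<lambda>n. x (r (r2 n)) a)"
    using insert.prems by (intro BseqI'[of _ B]) auto
  then have ca: "convergent (\<lambda>n. x (r (r2 n)) a)" using r2(2) Bseq_monoseq_convergent by blast
  have "convergent (\<lambda>n. x (r (r2 n)) i)" if "i \<in> I" for i
    using convergent_subseq_convergent[OF r(2)[rule_format, OF that] r2(1)] by (simp add: o_def)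
  moreover have "strict_mono (r \<circ> r2)" using r(1) r2(1) by (rule strict_mono_o)
  ultimately show ?case using ca by (intro exI[of _ "r \<circ> r2"]) (auto simp: o_def)
qed

lemma var_ineq:
  fixes A B :: real
  assumes B: "0 \<le> B" and h: "\<And>t. 0 < t \<Longrightarrow> t \<le> 1 \<Longrightarrow> 0 \<le> 2 * t * A + t\<^sup>2 * B"
  shows "0 \<le> A"
proof (rule ccontr)
  assume "\<not> 0 \<le> A"
  then have A: "A < 0" by simp
  define t where "t = min 1 (- A / (B + 1))"
  have "0 < - A / (B + 1)" using A B by (intro divide_pos_pos) auto
  then have t0: "0 < t" by (simp add: t_def)
  have t1: "t \<le> 1" by (simp add: t_def)
  have tB: "t * B \<le> - A" 
  proof -
    have "t \<le> - A / (B + 1)" by (simp add: t_def)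
    then have "t * (B + 1) \<le> - A / (B + 1) * (B + 1)" using B by (intro mult_right_mono) auto
    then have "t * (B + 1) \<le> - A" using B by simp
    then show ?thesis using t0 by (simp add: algebra_simps)
  qed
  have "2 * t * A + t\<^sup>2 * B = t * (2 * A + t * B)" by (simp add: power2_eq_square algebra_simps)
  also have "\<dots> < 0" using t0 tB A by (intro mult_pos_neg) auto
  finally show False using h[OF t0 t1] by simp
qed

lemma cmod_expand:
  fixes a b :: complex and t :: real
  shows "(cmod (a + complex_of_real t * b))\<^sup>2 = (cmod a)\<^sup>2 + 2 * t * Re (a * cnj b) + t\<^sup>2 * (cmod b)\<^sup>2"
  unfolding cmod_power2 by (simp add: power2_eq_square algebra_simps)


definition Zf :: "real \<Rightarrow> complex mat \<Rightarrow> complex mat \<Rightarrow> complex mat \<Rightarrow> nat \<Rightarrow> nat \<Rightarrow> complex" where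
  "Zf s \<rho> \<sigma> P i j = complex_of_real (1 + s) * \<sigma> $$ (i, j) - \<rho> $$ (i, j) - P $$ (i, j)"

definition gf :: "nat \<Rightarrow> real \<Rightarrow> complex mat \<Rightarrow> complex mat \<Rightarrow> complex mat \<Rightarrow> real" where
  "gf d s \<rho> \<sigma> P = (\<Sum>i<d. \<Sum>j<d. (cmod (Zf s \<rho> \<sigma> P i j))\<^sup>2)"

lemma gf_nonneg: "0 \<le> gf d s \<rho> \<sigma> P"
  unfolding gf_def by (intro sum_nonneg) auto

lemma gf_term: "i < d \<Longrightarrow> j < d \<Longrightarrow> (cmod (Zf s \<rho> \<sigma> P i j))\<^sup>2 \<le> gf d s \<rho> \<sigma> P"
proof -
  assume ij: "i < d" "j < d"
  have "(cmod (Zf s \<rho> \<sigma> P i j))\<^sup>2 \<le> (\<Sum>j'<d. (cmod (Zf s \<rho> \<sigma> P i j'))\<^sup>2)"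
    by (rule member_le_sum) (use ij in auto)
  also have "\<dots> \<le> gf d s \<rho> \<sigma> P" unfolding gf_def
    by (rule member_le_sum[of i "{..<d}" "\<lambda>i. \<Sum>j'<d. (cmod (Zf s \<rho> \<sigma> P i j'))\<^sup>2"]) (use ij in \<open>auto intro: sum_nonneg\<close>)
  finally show ?thesis .
qed

lemma sq_bound: fixes x c :: real assumes x: "0 \<le> x" and c: "x\<^sup>2 \<le> c" shows "x \<le> 1 + c"
proof (cases "x \<le> 1")
  case True
  have "0 \<le> c" using c by (metis order_trans zero_le_power2)
  then show ?thesis using True by linarith
next
  case False
  then have "x \<le> x * x" by (simp add: mult_le_cancel_left1)
  then show ?thesis using c by (simp add: power2_eq_square)
qed

lemma minimizer:
  assumes sub: "Fk \<subseteq> density d" and ne: "Fk \<noteq> {}" and cl: "mat_closed d Fk"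
    and r: "\<rho> \<in> density d" and s: "0 \<le> s"
  shows "\<exists>\<sigma>0 P0. \<sigma>0 \<in> Fk \<and> psd d P0 \<and> (\<forall>\<sigma>\<in>Fk. \<forall>P. psd d P \<longrightarrow> gf d s \<rho> \<sigma>0 P0 \<le> gf d s \<rho> \<sigma> P)"
proof -
  let ?G = "{gf d s \<rho> \<sigma> P | \<sigma> P. \<sigma> \<in> Fk \<and> psd d P}"
  obtain \<sigma>1 where \<sigma>1: "\<sigma>1 \<in> Fk" using ne by blast
  have Gne: "?G \<noteq> {}" using \<sigma>1 psd_zero by blast
  have Gbdd: "bdd_below ?G" by (rule bdd_belowI[of _ 0]) (auto simp: gf_nonneg)
  define m0 where "m0 = Inf ?G"
  have lower: "m0 \<le> gf d s \<rho> \<sigma> P" if "\<sigma> \<in> Fk" "psd d P" for \<sigma> P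
    unfolding m0_def by (rule cInf_lower[OF _ Gbdd]) (use that in blast)
  have m0pos: "0 \<le> m0" unfolding m0_def by (rule cInf_greatest[OF Gne]) (auto simp: gf_nonneg)
  have ex: "\<exists>\<sigma> P. \<sigma> \<in> Fk \<and> psd d P \<and> gf d s \<rho> \<sigma> P < m0 + inverse (real (Suc n))" for n
  proof -
    have "Inf ?G < m0 + inverse (real (Suc n))" unfolding m0_def by simp
    then obtain x where "x \<in> ?G" "x < m0 + inverse (real (Suc n))" using cInf_lessD[OF Gne] by blast
    then show ?thesis by blast
  qed
  have ex': "\<forall>n. \<exists>\<sigma> P. \<sigma> \<in> Fk \<and> psd d P \<and> gf d s \<rho> \<sigma> P < m0 + inverse (real (Suc n))"
    using ex by blast
  from choice[OF ex'] obtain S where S: "\<forall>n. \<exists>P. S n \<in> Fk \<and> psd d P \<and> gf d s \<rho> (S n) P < m0 + inverse (real (Suc n))"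
    by blast
  obtain Ps where Ps: "\<forall>n. S n \<in> Fk \<and> psd d (Ps n) \<and> gf d s \<rho> (S n) (Ps n) < m0 + inverse (real (Suc n))"
    using choice[OF S] by blast
  have SP: "\<And>n. S n \<in> Fk" "\<And>n. psd d (Ps n)"
    "\<And>n. gf d s \<rho> (S n) (Ps n) < m0 + inverse (real (Suc n))" using Ps by auto
  have rc: "\<rho> \<in> carrier_mat d d" using r density_carrier by blast
  have Sb: "cmod (S n $$ (i, j)) \<le> 1" if "i < d" "j < d" for n i j
    using density_bound[of "S n" d i j] SP(1)[of n] sub that by blast
  have rb: "cmod (\<rho> $$ (i, j)) \<le> 1" if "i < d" "j < d" for i j
    using density_bound[OF r that] .
  define B where "B = (1 + s) + 1 + (1 + (m0 + 1)) + 1"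
  have Pb: "cmod (Ps n $$ (i, j)) \<le> B" if ij: "i < d" "j < d" for n i j
  proof -
    have "(cmod (Zf s \<rho> (S n) (Ps n) i j))\<^sup>2 \<le> m0 + 1"
    proof -
      have "inverse (real (Suc n)) \<le> 1" by (simp add: inverse_le_1_iff)
      then show ?thesis using gf_term[OF ij, of s \<rho> "S n" "Ps n"] SP(3)[of n] by linarith
    qed
    then have z: "cmod (Zf s \<rho> (S n) (Ps n) i j) \<le> 1 + (m0 + 1)" by (intro sq_bound) auto
    have "Ps n $$ (i, j) = complex_of_real (1 + s) * S n $$ (i, j) - \<rho> $$ (i, j) - Zf s \<rho> (S n) (Ps n) i j"
      unfolding Zf_def by simp
    moreover have "cmod (a - b - c) \<le> cmod a + cmod b + cmod c" for a b c :: complex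
    proof -
      have "cmod (a - b - c) \<le> cmod (a - b) + cmod c" by (rule norm_triangle_ineq4)
      also have "cmod (a - b) \<le> cmod a + cmod b" by (rule norm_triangle_ineq4)
      finally show ?thesis by simp
    qed
    ultimately have t1: "cmod (Ps n $$ (i, j)) \<le> cmod (complex_of_real (1 + s) * S n $$ (i, j)) + cmod (\<rho> $$ (i, j)) + cmod (Zf s \<rho> (S n) (Ps n) i j)"
      by simp
    have t2: "cmod (complex_of_real (1 + s) * S n $$ (i, j)) \<le> (1 + s) * 1"
    proof -
      have "cmod (complex_of_real (1 + s) * S n $$ (i, j)) = \<bar>1 + s\<bar> * cmod (S n $$ (i, j))"
        by (subst norm_mult, subst norm_of_real) (rule refl)
      also have "\<dots> = (1 + s) * cmod (S n $$ (i, j))" using s by simp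
      also have "\<dots> \<le> (1 + s) * 1" using Sb[OF ij, of n] s by (intro mult_left_mono) auto
      finally show ?thesis .
    qed
    have t3: "cmod (complex_of_real (1 + s) * S n $$ (i, j)) + cmod (\<rho> $$ (i, j)) + cmod (Zf s \<rho> (S n) (Ps n) i j)
       \<le> (1 + s) * 1 + 1 + (1 + (m0 + 1))" using t2 rb[OF ij] z by (intro add_mono)
    have "(1 + s) * 1 + 1 + (1 + (m0 + 1)) \<le> B" unfolding B_def by simp
    then show ?thesis using t1 t3 by linarith
  qed
  define x where "x n ix = (case ix of (b, c, i, j) \<Rightarrow>
     (let M = (if b then S n else Ps n) in if c then Re (M $$ (i, j)) else Im (M $$ (i, j))))" for n ix
  let ?I = "(UNIV :: bool set) \<times> (UNIV :: bool set) \<times> {..<d} \<times> {..<d}"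
  have xb: "\<bar>x n ix\<bar> \<le> B" if ixI: "ix \<in> ?I" for n ix
  proof -
    obtain b c i j where ix: "ix = (b, c, i, j)" and ij: "i < d" "j < d" using ixI by auto
    have B1: "1 \<le> B" unfolding B_def using s m0pos by simp
    have "cmod ((if b then S n else Ps n) $$ (i, j)) \<le> B"
      using Sb[OF ij, of n] Pb[OF ij, of n] B1 by auto
    then show ?thesis unfolding ix x_def Let_def
      using abs_Re_le_cmod abs_Im_le_cmod order_trans by (cases c) (auto, blast+)
  qed
  obtain rr where rr: "strict_mono rr" "\<forall>ix\<in>?I. convergent (\<lambda>n. x (rr n) ix)"
    using BW_fin[of ?I x B] xb by auto
  define lm where "lm ix = lim (\<lambda>n. x (rr n) ix)" for ix
  have lm: "(\<lambda>n. x (rr n) ix) \<longlonglongrightarrow> lm ix" if "ix \<in> ?I" for ix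
    using rr(2) that unfolding lm_def convergent_LIMSEQ_iff by blast
  define \<sigma>0 where "\<sigma>0 = mat d d (\<lambda>(i, j). Complex (lm (True, True, i, j)) (lm (True, False, i, j)))"
  define P0 where "P0 = mat d d (\<lambda>(i, j). Complex (lm (False, True, i, j)) (lm (False, False, i, j)))"
  have limS: "(\<lambda>n. S (rr n) $$ (i, j)) \<longlonglongrightarrow> \<sigma>0 $$ (i, j)" if ij: "i < d" "j < d" for i j
  proof -
    have "(\<lambda>n. Complex (x (rr n) (True, True, i, j)) (x (rr n) (True, False, i, j)))
       \<longlonglongrightarrow> Complex (lm (True, True, i, j)) (lm (True, False, i, j))"
      by (intro tendsto_Complex lm) (use ij in auto)
    then show ?thesis unfolding x_def \<sigma>0_def using ij by simp
  qed
  have limP: "(\<lambda>n. Ps (rr n) $$ (i, j)) \<longlonglongrightarrow> P0 $$ (i, j)" if ij: "i < d" "j < d" for i j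
  proof -
    have "(\<lambda>n. Complex (x (rr n) (False, True, i, j)) (x (rr n) (False, False, i, j)))
       \<longlonglongrightarrow> Complex (lm (False, True, i, j)) (lm (False, False, i, j))"
      by (intro tendsto_Complex lm) (use ij in auto)
    then show ?thesis unfolding x_def P0_def using ij by simp
  qed
  have s0: "\<sigma>0 \<in> Fk"
    using cl unfolding mat_closed_def
    by (rule allE[of _ "\<lambda>n. S (rr n)"], elim allE[of _ \<sigma>0]) (use SP(1) limS in \<open>auto simp: \<sigma>0_def\<close>)
  have p0: "psd d P0"
    by (rule psd_closed[where X="\<lambda>n. Ps (rr n)"]) (use SP(2) limP in \<open>auto simp: P0_def\<close>)
  have g1: "(\<lambda>n. gf d s \<rho> (S (rr n)) (Ps (rr n))) \<longlonglongrightarrow> gf d s \<rho> \<sigma>0 P0"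
    unfolding gf_def Zf_def
    by (intro tendsto_sum tendsto_power tendsto_norm tendsto_diff tendsto_mult tendsto_const limS limP) auto
  have g2: "(\<lambda>n. gf d s \<rho> (S (rr n)) (Ps (rr n))) \<longlonglongrightarrow> m0"
  proof (rule tendsto_sandwich[of "\<lambda>_. m0" _ _ "\<lambda>n. m0 + inverse (real (Suc n))"])
    show "\<forall>\<^sub>F n in sequentially. m0 \<le> gf d s \<rho> (S (rr n)) (Ps (rr n))"
      using lower SP by auto
    show "\<forall>\<^sub>F n in sequentially. gf d s \<rho> (S (rr n)) (Ps (rr n)) \<le> m0 + inverse (real (Suc n))"
    proof (rule always_eventually, rule allI)
      fix n
      have "n \<le> rr n" using rr(1) by (rule seq_suble)
      then have "inverse (real (Suc (rr n))) \<le> inverse (real (Suc n))"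
        by (intro le_imp_inverse_le) auto
      then show "gf d s \<rho> (S (rr n)) (Ps (rr n)) \<le> m0 + inverse (real (Suc n))"
        using SP(3)[of "rr n"] by linarith
    qed
    show "(\<lambda>_. m0) \<longlonglongrightarrow> m0" by simp
    show "(\<lambda>n. m0 + inverse (real (Suc n))) \<longlonglongrightarrow> m0"
      using tendsto_add[OF tendsto_const[of m0] LIMSEQ_inverse_real_of_nat] by simp
  qed
  have "gf d s \<rho> \<sigma>0 P0 = m0" using LIMSEQ_unique[OF g1 g2] .
  then show ?thesis using s0 p0 lower by auto
qed


definition ipf :: "nat \<Rightarrow> (nat \<Rightarrow> nat \<Rightarrow> complex) \<Rightarrow> (nat \<Rightarrow> nat \<Rightarrow> complex) \<Rightarrow> real" where
  "ipf d W B = (\<Sum>i<d. \<Sum>j<d. Re (W i j * cnj (B i j)))"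

lemma ipf_tr:
  assumes "herm d (ent B)"
  shows "ipf d W (ent B) = Re (\<Sum>i<d. \<Sum>j<d. W i j * B $$ (j, i))"
proof -
  have "ipf d W (ent B) = (\<Sum>i<d. \<Sum>j<d. Re (W i j * B $$ (j, i)))"
    unfolding ipf_def
  proof (intro sum.cong refl)
    fix i j assume "i \<in> {..<d}" "j \<in> {..<d}"
    then have "ent B j i = cnj (ent B i j)" using herm_sym[OF assms, of i j] by blast
    then show "Re (W i j * cnj (ent B i j)) = Re (W i j * B $$ (j, i))" by (simp add: ent_def)
  qed
  then show ?thesis by (simp add: Re_sum)
qed

lemma var_step:
  assumes sub: "Fk \<subseteq> density d" and cv: "mat_convex Fk" and r: "\<rho> \<in> density d"
    and s0: "\<sigma>0 \<in> Fk" and p0: "psd d P0"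
    and min: "\<forall>\<sigma>\<in>Fk. \<forall>P. psd d P \<longrightarrow> gf d s \<rho> \<sigma>0 P0 \<le> gf d s \<rho> \<sigma> P"
    and sF: "\<sigma> \<in> Fk" and pP: "psd d P"
  shows "0 \<le> (\<Sum>i<d. \<Sum>j<d. Re (Zf s \<rho> \<sigma>0 P0 i j * cnj (Zf s \<rho> \<sigma> P i j - Zf s \<rho> \<sigma>0 P0 i j)))"
proof -
  let ?z = "Zf s \<rho> \<sigma>0 P0" and ?k = "Zf s \<rho> \<sigma> P"
  define A where "A = (\<Sum>i<d. \<Sum>j<d. Re (?z i j * cnj (?k i j - ?z i j)))"
  define Bq where "Bq = (\<Sum>i<d. \<Sum>j<d. (cmod (?k i j - ?z i j))\<^sup>2)"
  have Bq: "0 \<le> Bq" unfolding Bq_def by (intro sum_nonneg) auto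
  have sc: "\<sigma> \<in> carrier_mat d d" "\<sigma>0 \<in> carrier_mat d d" using sub sF s0 density_carrier by auto
  have pc: "P \<in> carrier_mat d d" "P0 \<in> carrier_mat d d" using pP p0 by (auto simp: psd_def)
  have "0 \<le> 2 * t * A + t\<^sup>2 * Bq" if t: "0 < t" "t \<le> 1" for t
  proof -
    let ?st = "complex_of_real t \<cdot>\<^sub>m \<sigma> + complex_of_real (1 - t) \<cdot>\<^sub>m \<sigma>0"
    let ?Pt = "complex_of_real t \<cdot>\<^sub>m P + complex_of_real (1 - t) \<cdot>\<^sub>m P0"
    have st: "?st \<in> Fk" using cv sF s0 t unfolding mat_convex_def by auto
    have Pt: "psd d ?Pt" by (rule psd_comb[OF pP p0]) (use t in auto)
    have ze: "Zf s \<rho> ?st ?Pt i j = ?z i j + complex_of_real t * (?k i j - ?z i j)" if "i < d" "j < d" for i j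
      using that sc pc unfolding Zf_def by (simp add: algebra_simps)
    have sq: "(cmod (Zf s \<rho> ?st ?Pt i j))\<^sup>2 = (cmod (?z i j))\<^sup>2 + 2 * t * Re (?z i j * cnj (?k i j - ?z i j)) + t\<^sup>2 * (cmod (?k i j - ?z i j))\<^sup>2"
      if "i < d" "j < d" for i j
      unfolding ze[OF that] by (rule cmod_expand)
    have "gf d s \<rho> ?st ?Pt = gf d s \<rho> \<sigma>0 P0 + 2 * t * A + t\<^sup>2 * Bq"
    proof -
      have "gf d s \<rho> ?st ?Pt = (\<Sum>i<d. \<Sum>j<d. (cmod (?z i j))\<^sup>2 + 2 * t * Re (?z i j * cnj (?k i j - ?z i j)) + t\<^sup>2 * (cmod (?k i j - ?z i j))\<^sup>2)"
        unfolding gf_def by (intro sum.cong refl sq) auto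
      also have "\<dots> = gf d s \<rho> \<sigma>0 P0 + 2 * t * A + t\<^sup>2 * Bq"
        unfolding gf_def A_def Bq_def by (simp add: sum.distrib sum_distrib_left)
      finally show ?thesis .
    qed
    moreover have "gf d s \<rho> \<sigma>0 P0 \<le> gf d s \<rho> ?st ?Pt" using min st Pt by blast
    ultimately show ?thesis by linarith
  qed
  then have "0 \<le> A" using var_ineq[OF Bq] by blast
  then show ?thesis unfolding A_def .
qed


lemma psd_smult:
  assumes A: "psd d A" and a: "0 \<le> a"
  shows "psd d (complex_of_real a \<cdot>\<^sub>m A)"
proof -
  have Ac: "A \<in> carrier_mat d d" using A by (simp add: psd_def)
  have "complex_of_real a \<cdot>\<^sub>m A + complex_of_real 0 \<cdot>\<^sub>m A = complex_of_real a \<cdot>\<^sub>m A"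
    by (rule eq_matI) (use Ac in auto)
  then show ?thesis using psd_comb[OF A A a order_refl] by simp
qed

lemma psd_trace0:
  assumes P: "psd d P" and tr: "mtrace P = 0" and ij: "i < d" "j < d"
  shows "P $$ (i, j) = 0"
proof -
  have Pc: "P \<in> carrier_mat d d" and p: "pos d (ent P)" using P psd_pos by auto
  have h: "herm d (ent P)" using p by (simp add: pos_def)
  have nn: "\<forall>k\<in>{..<d}. 0 \<le> Re (P $$ (k, k))" using pos_diag[OF p] by (simp add: ent_def)
  have "(\<Sum>k<d. Re (P $$ (k, k))) = 0" using tr Pc unfolding mtrace_def by (simp add: Re_sum[symmetric])
  then have d0: "\<forall>k\<in>{..<d}. Re (P $$ (k, k)) = 0"
    using sum_nonneg_eq_0_iff[of "{..<d}" "\<lambda>k. Re (P $$ (k, k))"] nn by simp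
  show ?thesis
  proof (cases "i = j")
    case True
    have e: "P $$ (i, i) = complex_of_real (Re (P $$ (i, i)))" using herm_diag_real[OF h ij(1)] unfolding ent_def .
    have "Re (P $$ (i, i)) = 0" using d0 ij by simp
    then show ?thesis using True e by (metis of_real_0)
  next
    case False
    have "(cmod (P $$ (i, j)))\<^sup>2 \<le> Re (P $$ (i, i)) * Re (P $$ (j, j))"
      using pos_offdiag[OF p ij False] by (simp add: ent_def)
    then have "(cmod (P $$ (i, j)))\<^sup>2 \<le> 0" using d0 ij by simp
    then show ?thesis by simp
  qed
qed

lemma zero_gap:
  assumes r: "\<rho> \<in> density d" and s0: "\<sigma>0 \<in> density d" and p0: "psd d P0" and s: "0 \<le> s"
    and z: "\<And>i j. i < d \<Longrightarrow> j < d \<Longrightarrow> Zf s \<rho> \<sigma>0 P0 i j = 0"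
  shows "\<exists>\<tau>\<in>density d. complex_of_real (1 / (1 + s)) \<cdot>\<^sub>m (\<rho> + complex_of_real s \<cdot>\<^sub>m \<tau>) = \<sigma>0"
proof -
  have rc: "\<rho> \<in> carrier_mat d d" and sc: "\<sigma>0 \<in> carrier_mat d d" using r s0 density_carrier by auto
  have pc: "P0 \<in> carrier_mat d d" using p0 by (simp add: psd_def)
  have trr: "mtrace \<rho> = 1" and trs: "mtrace \<sigma>0 = 1" using r s0 by (auto simp: density_def)
  have Pe: "P0 $$ (i, j) = complex_of_real (1 + s) * \<sigma>0 $$ (i, j) - \<rho> $$ (i, j)" if "i < d" "j < d" for i j
    using z[OF that] unfolding Zf_def by (simp add: algebra_simps)
  have trP: "mtrace P0 = complex_of_real s"
  proof -
    have "mtrace P0 = (\<Sum>i<d. complex_of_real (1 + s) * \<sigma>0 $$ (i, i) - \<rho> $$ (i, i))"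
      unfolding mtrace_def using pc by (intro sum.cong) (auto simp: Pe)
    also have "\<dots> = complex_of_real (1 + s) * mtrace \<sigma>0 - mtrace \<rho>"
      unfolding mtrace_def using sc rc by (simp add: sum_subtractf sum_distrib_left)
    finally show ?thesis using trr trs by simp
  qed
  show ?thesis
  proof (cases "s = 0")
    case True
    have "P0 $$ (i, j) = 0" if "i < d" "j < d" for i j
      using psd_trace0[OF p0 _ that] trP True by simp
    then have "\<sigma>0 $$ (i, j) = \<rho> $$ (i, j)" if "i < d" "j < d" for i j
      using Pe[OF that] that True by simp
    then have "complex_of_real (1 / (1 + s)) \<cdot>\<^sub>m (\<rho> + complex_of_real s \<cdot>\<^sub>m \<rho>) = \<sigma>0"
      using True rc sc by (intro eq_matI) auto
    then show ?thesis using r by blast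
  next
    case False
    then have sp: "s > 0" using s by simp
    let ?\<tau> = "complex_of_real (1 / s) \<cdot>\<^sub>m P0"
    have tp: "psd d ?\<tau>" by (rule psd_smult[OF p0]) (use sp in simp)
    have "mtrace ?\<tau> = complex_of_real (1 / s) * mtrace P0"
      unfolding mtrace_def using pc by (simp add: sum_distrib_left)
    then have tt: "mtrace ?\<tau> = 1" using trP sp by simp
    have td: "?\<tau> \<in> density d" using tp tt by (simp add: density_def)
    have "complex_of_real (1 / (1 + s)) \<cdot>\<^sub>m (\<rho> + complex_of_real s \<cdot>\<^sub>m ?\<tau>) = \<sigma>0"
    proof (rule eq_matI)
      fix i j assume "i < dim_row \<sigma>0" "j < dim_col \<sigma>0"
      then have ij: "i < d" "j < d" using sc by auto
      have c1: "complex_of_real (1 + s) \<noteq> 0" using sp by (simp add: complex_eq_iff)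
      have "(complex_of_real (1 / (1 + s)) \<cdot>\<^sub>m (\<rho> + complex_of_real s \<cdot>\<^sub>m ?\<tau>)) $$ (i, j)
          = complex_of_real (1 / (1 + s)) * (\<rho> $$ (i, j) + complex_of_real s * (complex_of_real (1 / s) * P0 $$ (i, j)))"
        using ij rc pc by simp
      also have "\<dots> = complex_of_real (1 / (1 + s)) * (\<rho> $$ (i, j) + P0 $$ (i, j))"
      proof -
        have "complex_of_real s * (complex_of_real (1 / s) * P0 $$ (i, j)) = (complex_of_real s * complex_of_real (1 / s)) * P0 $$ (i, j)"
          by (simp only: mult.assoc)
        also have "complex_of_real s * complex_of_real (1 / s) = 1" using sp by (simp flip: of_real_mult)
        finally show ?thesis by simp
      qed
      also have "\<dots> = (complex_of_real (1 / (1 + s)) * complex_of_real (1 + s)) * \<sigma>0 $$ (i, j)"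
        unfolding Pe[OF ij] by (simp only: mult.assoc) simp
      also have "complex_of_real (1 / (1 + s)) * complex_of_real (1 + s) = 1" using c1 sp by (simp flip: of_real_mult)
      finally show "(complex_of_real (1 / (1 + s)) \<cdot>\<^sub>m (\<rho> + complex_of_real s \<cdot>\<^sub>m ?\<tau>)) $$ (i, j) = \<sigma>0 $$ (i, j)" by simp
    qed (use rc sc pc in auto)
    then show ?thesis using td by blast
  qed
qed


lemma re_alg:
  fixes z a b :: complex and c :: real
  shows "Re (z * cnj (complex_of_real c * a - b - z)) = Re (- z * cnj b) - c * Re (- z * cnj a) - (cmod z)\<^sup>2"
  unfolding cmod_power2 by (simp add: algebra_simps power2_eq_square)

lemma separation:
  assumes sub: "Fk \<subseteq> density d" and ne: "Fk \<noteq> {}" and cl: "mat_closed d Fk" and cv: "mat_convex Fk"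
    and r: "\<rho> \<in> density d" and s: "0 \<le> s"
    and nS: "\<not> (\<exists>\<tau>\<in>density d. complex_of_real (1 / (1 + s)) \<cdot>\<^sub>m (\<rho> + complex_of_real s \<cdot>\<^sub>m \<tau>) \<in> Fk)"
  shows "\<exists>W \<delta>. herm d W \<and> (\<forall>v. 0 \<le> Re (qf d W v)) \<and> 0 < \<delta> \<and>
     (\<forall>\<sigma>\<in>Fk. 0 \<le> ipf d W (ent \<sigma>) \<and> (1 + s) * ipf d W (ent \<sigma>) + \<delta> \<le> ipf d W (ent \<rho>))"
proof -
  obtain \<sigma>0 P0 where s0: "\<sigma>0 \<in> Fk" and p0: "psd d P0"
    and min: "\<forall>\<sigma>\<in>Fk. \<forall>P. psd d P \<longrightarrow> gf d s \<rho> \<sigma>0 P0 \<le> gf d s \<rho> \<sigma> P"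
    using minimizer[OF sub ne cl r s] by blast
  let ?z = "Zf s \<rho> \<sigma>0 P0"
  define W where "W i j = - ?z i j" for i j
  have rc: "\<rho> \<in> carrier_mat d d" using r density_carrier by blast
  have sd0: "\<sigma>0 \<in> density d" using s0 sub by blast
  have sc: "\<sigma>0 \<in> carrier_mat d d" using sd0 density_carrier by blast
  have pc: "P0 \<in> carrier_mat d d" using p0 by (simp add: psd_def)
  have hr: "herm d (ent \<rho>)" using r psd_pos density_psd pos_def by blast
  have hs: "herm d (ent \<sigma>0)" using sd0 psd_pos density_psd pos_def by blast
  have hp: "herm d (ent P0)" using p0 psd_pos pos_def by blast
  have hW: "herm d W" unfolding herm_def
  proof (intro allI impI)
    fix i j assume ij: "i < d" "j < d"
    have "\<rho> $$ (j, i) = cnj (\<rho> $$ (i, j))" using herm_sym[OF hr ij] by (simp add: ent_def)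
    moreover have "\<sigma>0 $$ (j, i) = cnj (\<sigma>0 $$ (i, j))" using herm_sym[OF hs ij] by (simp add: ent_def)
    moreover have "P0 $$ (j, i) = cnj (P0 $$ (i, j))" using herm_sym[OF hp ij] by (simp add: ent_def)
    ultimately show "W j i = cnj (W i j)" unfolding W_def Zf_def by simp
  qed
  have dual: "0 \<le> ipf d W (ent Q)" if Q: "psd d Q" for Q
  proof -
    have Qc: "Q \<in> carrier_mat d d" using Q by (simp add: psd_def)
    have "0 \<le> (\<Sum>i<d. \<Sum>j<d. Re (?z i j * cnj (Zf s \<rho> \<sigma>0 (P0 + Q) i j - ?z i j)))"
      by (rule var_step[OF sub cv r s0 p0 min s0 psd_add[OF p0 Q]])
    also have "\<dots> = ipf d W (ent Q)" unfolding ipf_def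
    proof (intro sum.cong refl)
      fix i j assume "i \<in> {..<d}" "j \<in> {..<d}"
      then have "Zf s \<rho> \<sigma>0 (P0 + Q) i j - ?z i j = - Q $$ (i, j)"
        using pc Qc unfolding Zf_def by simp
      then show "Re (?z i j * cnj (Zf s \<rho> \<sigma>0 (P0 + Q) i j - ?z i j)) = Re (W i j * cnj (ent Q i j))"
        unfolding W_def ent_def by simp
    qed
    finally show ?thesis .
  qed
  have qW: "0 \<le> Re (qf d W v)" for v
  proof -
    have "ipf d W (ent (rank1 d v)) = (\<Sum>i<d. \<Sum>j<d. Re (cnj (v i) * W i j * v j))"
      unfolding ipf_def ent_def rank1_def by (intro sum.cong refl) (simp add: algebra_simps)
    also have "\<dots> = Re (qf d W v)" unfolding qf_def by (simp add: Re_sum)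
    finally show ?thesis using dual[OF psd_rank1[of d v]] by linarith
  qed
  define \<delta> where "\<delta> = gf d s \<rho> \<sigma>0 P0"
  have main: "(1 + s) * ipf d W (ent \<sigma>) + \<delta> \<le> ipf d W (ent \<rho>)" if sF: "\<sigma> \<in> Fk" for \<sigma>
  proof -
    have sc1: "\<sigma> \<in> carrier_mat d d" using sF sub density_carrier by blast
    have "0 \<le> (\<Sum>i<d. \<Sum>j<d. Re (?z i j * cnj (Zf s \<rho> \<sigma> (0\<^sub>m d d) i j - ?z i j)))"
      by (rule var_step[OF sub cv r s0 p0 min sF psd_zero])
    also have "\<dots> = ipf d W (ent \<rho>) - (1 + s) * ipf d W (ent \<sigma>) - \<delta>"
    proof -
      have e: "Re (?z i j * cnj (Zf s \<rho> \<sigma> (0\<^sub>m d d) i j - ?z i j))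
          = Re (W i j * cnj (ent \<rho> i j)) - (1 + s) * Re (W i j * cnj (ent \<sigma> i j)) - (cmod (?z i j))\<^sup>2"
        if "i < d" "j < d" for i j
      proof -
        have zk: "Zf s \<rho> \<sigma> (0\<^sub>m d d) i j = complex_of_real (1 + s) * \<sigma> $$ (i, j) - \<rho> $$ (i, j)"
          using that unfolding Zf_def by simp
        show ?thesis unfolding zk W_def ent_def by (rule re_alg)
      qed
      have "(\<Sum>i<d. \<Sum>j<d. Re (?z i j * cnj (Zf s \<rho> \<sigma> (0\<^sub>m d d) i j - ?z i j)))
         = (\<Sum>i<d. \<Sum>j<d. Re (W i j * cnj (ent \<rho> i j)) - (1 + s) * Re (W i j * cnj (ent \<sigma> i j)) - (cmod (?z i j))\<^sup>2)"
        by (intro sum.cong refl e) auto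
      also have "\<dots> = ipf d W (ent \<rho>) - (1 + s) * ipf d W (ent \<sigma>) - \<delta>"
        unfolding ipf_def \<delta>_def gf_def by (simp only: sum_subtractf sum_distrib_left)
      finally show ?thesis .
    qed
    finally show ?thesis by simp
  qed
  have \<delta>pos: "0 < \<delta>"
  proof (rule ccontr)
    assume "\<not> 0 < \<delta>"
    then have d0: "\<delta> \<le> 0" by simp
    have "?z i j = 0" if "i < d" "j < d" for i j
    proof -
      have "(cmod (?z i j))\<^sup>2 \<le> \<delta>" unfolding \<delta>_def by (rule gf_term[OF that])
      then have "(cmod (?z i j))\<^sup>2 \<le> 0" using d0 by linarith
      then show ?thesis by simp
    qed
    then obtain \<tau> where "\<tau> \<in> density d" "complex_of_real (1 / (1 + s)) \<cdot>\<^sub>m (\<rho> + complex_of_real s \<cdot>\<^sub>m \<tau>) = \<sigma>0"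
      using zero_gap[OF r sd0 p0 s] by blast
    then show False using nS s0 by auto
  qed
  show ?thesis using hW qW \<delta>pos main dual sub density_psd by blast
qed


lemma qf_bound:
  fixes n :: nat
  shows "cmod (qf n W v) \<le> (\<Sum>i<n. \<Sum>j<n. cmod (W i j)) * (\<Sum>l<n. (cmod (v l))\<^sup>2)"
proof -
  let ?S = "\<Sum>l<n. (cmod (v l))\<^sup>2"
  have vs: "(cmod (v i))\<^sup>2 \<le> ?S" if "i < n" for i
    by (rule member_le_sum) (use that in auto)
  have ab: "cmod (v i) * cmod (v j) \<le> ?S" if "i < n" "j < n" for i j
  proof -
    have "2 * (cmod (v i) * cmod (v j)) \<le> (cmod (v i))\<^sup>2 + (cmod (v j))\<^sup>2"
      using sum_squares_bound[of "cmod (v i)" "cmod (v j)"] by (simp add: power2_eq_square)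
    then show ?thesis using vs[OF that(1)] vs[OF that(2)] by linarith
  qed
  have "cmod (qf n W v) \<le> (\<Sum>i<n. \<Sum>j<n. cmod (cnj (v i) * W i j * v j))"
    unfolding qf_def by (rule order_trans[OF norm_sum sum_mono[OF norm_sum]])
  also have "\<dots> \<le> (\<Sum>i<n. \<Sum>j<n. cmod (W i j) * ?S)"
  proof (intro sum_mono)
    fix i j assume "i \<in> {..<n}" "j \<in> {..<n}"
    then have "cmod (v i) * cmod (v j) \<le> ?S" using ab by simp
    then have "cmod (W i j) * (cmod (v i) * cmod (v j)) \<le> cmod (W i j) * ?S"
      by (intro mult_left_mono) auto
    then show "cmod (cnj (v i) * W i j * v j) \<le> cmod (W i j) * ?S"
      by (simp add: norm_mult algebra_simps)
  qed
  also have "\<dots> = (\<Sum>i<n. \<Sum>j<n. cmod (W i j)) * ?S" by (simp add: sum_distrib_right)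
  finally show ?thesis .
qed

lemma id_channel: "channel d d (\<lambda>A. A)"
proof -
  have "ampl k d d (\<lambda>A. A) X = X" if X: "X \<in> carrier_mat (k * d) (k * d)" for k X
  proof (rule eq_matI)
    fix i j assume "i < dim_row X" "j < dim_col X"
    then have ij: "i < k * d" "j < k * d" using X by auto
    then have d: "0 < d" by (cases d) auto
    have "i mod d < d" "j mod d < d" using d by auto
    then show "ampl k d d (\<lambda>A. A) X $$ (i, j) = X $$ (i, j)"
      unfolding ampl_def blk_def using ij by (simp add: mult.commute[of "i div d"] mult.commute[of "j div d"])
  qed (use X in \<open>auto simp: ampl_def\<close>)
  then show ?thesis unfolding channel_def by (auto simp: psd_def)
qed

lemma construct:
  assumes hW: "herm d W" and qW: "\<And>v. 0 \<le> Re (qf d W v)"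
  shows "\<exists>\<epsilon>>0. \<exists>M. povm d 2 M \<and> channel_ensemble d d 2 (\<lambda>i. if i = 0 then 1 else 0) (\<lambda>i A. A) \<and>
     (\<forall>\<omega> \<in> carrier_mat d d. p_succ \<omega> 2 (\<lambda>i. if i = 0 then 1 else 0) (\<lambda>i A. A) M
         = \<epsilon> * Re (\<Sum>i<d. \<Sum>j<d. W i j * \<omega> $$ (j, i)))"
proof -
  define C where "C = (\<Sum>i<d. \<Sum>j<d. cmod (W i j))"
  have C0: "0 \<le> C" unfolding C_def by (intro sum_nonneg) auto
  define \<epsilon> where "\<epsilon> = 1 / (1 + C)"
  have e0: "0 < \<epsilon>" unfolding \<epsilon>_def using C0 by simp
  have eC: "\<epsilon> * C \<le> 1" unfolding \<epsilon>_def using C0 by (simp add: field_simps)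
  define X where "X = mat d d (\<lambda>(i, j). complex_of_real \<epsilon> * W i j)"
  define M1 where "M1 = mat d d (\<lambda>(a, b). (if a = b then 1 else 0) - X $$ (a, b))"
  define M where "M i = (if i = 0 then X else M1)" for i :: nat
  have Xc: "X \<in> carrier_mat d d" and M1c: "M1 \<in> carrier_mat d d" unfolding X_def M1_def by auto
  have entX: "ent X i j = complex_of_real \<epsilon> * W i j" if "i < d" "j < d" for i j
    unfolding X_def ent_def using that by simp
  have entM1: "ent M1 i j = (if i = j then 1 else 0) - complex_of_real \<epsilon> * W i j" if "i < d" "j < d" for i j
    unfolding M1_def ent_def using that entX[OF that] by (simp add: ent_def)
  have hX: "herm d (ent X)" unfolding herm_def
  proof (intro allI impI)
    fix i j assume ij: "i < d" "j < d"
    show "ent X j i = cnj (ent X i j)" unfolding entX[OF ij] entX[OF ij(2) ij(1)] herm_sym[OF hW ij] by simp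
  qed
  have hM1: "herm d (ent M1)" unfolding herm_def
  proof (intro allI impI)
    fix i j assume ij: "i < d" "j < d"
    show "ent M1 j i = cnj (ent M1 i j)" unfolding entM1[OF ij] entM1[OF ij(2) ij(1)] herm_sym[OF hW ij] by simp
  qed
  have qX: "qf d (ent X) v = complex_of_real \<epsilon> * qf d W v" for v
  proof -
    have "qf d (ent X) v = (\<Sum>i<d. \<Sum>j<d. complex_of_real \<epsilon> * (cnj (v i) * W i j * v j))"
      unfolding qf_def by (intro sum.cong refl) (simp add: entX)
    then show ?thesis unfolding qf_def by (simp add: sum_distrib_left)
  qed
  have pX: "psd d X" using psd_pos Xc hX qX qW e0 by (simp add: pos_def)
  have qM1: "0 \<le> Re (qf d (ent M1) v)" for v
  proof -
    let ?S = "\<Sum>l<d. (cmod (v l))\<^sup>2"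
    have "qf d (ent M1) v = (\<Sum>i<d. \<Sum>j<d. (if i = j then cnj (v i) * v j else 0) - complex_of_real \<epsilon> * (cnj (v i) * W i j * v j))"
      unfolding qf_def by (intro sum.cong refl) (simp add: entM1 algebra_simps)
    also have "\<dots> = (\<Sum>i<d. cnj (v i) * v i) - complex_of_real \<epsilon> * qf d W v"
      unfolding qf_def by (simp add: sum_subtractf sum_distrib_left)
    finally have e: "Re (qf d (ent M1) v) = ?S - \<epsilon> * Re (qf d W v)"
      by (simp add: Re_sum complex_mult_cnj cmod_power2 mult.commute[of "cnj _"])
    have "Re (qf d W v) \<le> cmod (qf d W v)" by (rule complex_Re_le_cmod)
    also have "\<dots> \<le> C * ?S" unfolding C_def by (rule qf_bound)
    finally have "\<epsilon> * Re (qf d W v) \<le> \<epsilon> * (C * ?S)" using e0 by (intro mult_left_mono) auto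
    also have "\<epsilon> * (C * ?S) \<le> 1 * ?S" unfolding mult.assoc[symmetric]
      by (rule mult_right_mono[OF eC]) (auto intro: sum_nonneg)
    finally show ?thesis using e by simp
  qed
  have pM1: "psd d M1" using psd_pos M1c hM1 qM1 by (simp add: pos_def)
  have povm: "povm d 2 M"
    unfolding povm_def
  proof (intro conjI allI impI)
    fix i :: nat assume "i < 2"
    then show "psd d (M i)" using pX pM1 unfolding M_def by auto
  next
    fix a b assume ab: "a < d" "b < d"
    have "(\<Sum>i<2. M i $$ (a, b)) = X $$ (a, b) + M1 $$ (a, b)" unfolding M_def by (simp add: numeral_2_eq_2)
    also have "\<dots> = (1\<^sub>m d :: complex mat) $$ (a, b)" unfolding M1_def using ab by simp
    finally show "(\<Sum>i<2. M i $$ (a, b)) = (1\<^sub>m d :: complex mat) $$ (a, b)" .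
  qed
  have ens: "channel_ensemble d d 2 (\<lambda>i. if i = 0 then 1 else 0) (\<lambda>i A. A)"
    unfolding channel_ensemble_def using id_channel by (simp add: numeral_2_eq_2)
  have ps: "p_succ \<omega> 2 (\<lambda>i. if i = 0 then 1 else 0) (\<lambda>i A. A) M = \<epsilon> * Re (\<Sum>i<d. \<Sum>j<d. W i j * \<omega> $$ (j, i))"
    if w: "\<omega> \<in> carrier_mat d d" for \<omega>
  proof -
    have "p_succ \<omega> 2 (\<lambda>i. if i = 0 then 1 else 0) (\<lambda>i A. A) M = Re (mtrace (X * \<omega>))"
      unfolding p_succ_def M_def by (simp add: numeral_2_eq_2)
    also have "mtrace (X * \<omega>) = (\<Sum>i<d. \<Sum>j<d. complex_of_real \<epsilon> * (W i j * \<omega> $$ (j, i)))"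
      unfolding mtrace_mult[OF Xc w] by (intro sum.cong refl) (simp add: X_def)
    also have "\<dots> = complex_of_real \<epsilon> * (\<Sum>i<d. \<Sum>j<d. W i j * \<omega> $$ (j, i))"
      by (simp add: sum_distrib_left)
    finally show ?thesis by simp
  qed
  show ?thesis using e0 povm ens ps by blast
qed


lemma density_herm: "\<sigma> \<in> density d \<Longrightarrow> herm d (ent \<sigma>)"
  using density_psd psd_pos pos_def by blast

lemma sr_ge:
  assumes sub: "Fk \<subseteq> density d" and ne: "Fk \<noteq> {}" and cl: "mat_closed d Fk" and cv: "mat_convex Fk"
    and r: "\<rho> \<in> density d" and s: "0 \<le> s"
    and nS: "\<not> (\<exists>\<tau>\<in>density d. complex_of_real (1 / (1 + s)) \<cdot>\<^sub>m (\<rho> + complex_of_real s \<cdot>\<^sub>m \<tau>) \<in> Fk)"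
  shows "ereal (1 + s) \<le> succ_ratio d Fk \<rho>"
proof -
  obtain W \<delta> where hW: "herm d W" and qW: "\<forall>v. 0 \<le> Re (qf d W v)" and dp: "0 < \<delta>"
    and sep: "\<forall>\<sigma>\<in>Fk. 0 \<le> ipf d W (ent \<sigma>) \<and> (1 + s) * ipf d W (ent \<sigma>) + \<delta> \<le> ipf d W (ent \<rho>)"
    using separation[OF sub ne cl cv r s nS] by blast
  let ?p = "\<lambda>i::nat. if i = 0 then (1::real) else 0"
  let ?L = "\<lambda>(i::nat) (A::complex mat). A"
  obtain \<epsilon> M where e0: "0 < \<epsilon>" and povm: "povm d 2 M" and ens: "channel_ensemble d d 2 ?p ?L"
    and ps: "\<forall>\<omega> \<in> carrier_mat d d. p_succ \<omega> 2 ?p ?L M = \<epsilon> * Re (\<Sum>i<d. \<Sum>j<d. W i j * \<omega> $$ (j, i))"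
    using construct[OF hW] qW by blast
  have psd': "p_succ \<sigma> 2 ?p ?L M = \<epsilon> * ipf d W (ent \<sigma>)" if "\<sigma> \<in> density d" for \<sigma>
    using ps density_carrier[OF that] ipf_tr[OF density_herm[OF that]] by simp
  obtain \<sigma>1 where \<sigma>1: "\<sigma>1 \<in> Fk" using ne by blast
  let ?a = "p_succ \<rho> 2 ?p ?L M"
  let ?D = "SUP \<sigma> \<in> Fk. ereal (p_succ \<sigma> 2 ?p ?L M)"
  have a: "?a = \<epsilon> * ipf d W (ent \<rho>)" using psd'[OF r] .
  have "ipf d W (ent \<rho>) \<ge> \<delta>" using sep \<sigma>1 s
    by (smt (verit, ccfv_SIG) mult_nonneg_nonneg)
  then have apos: "0 < ?a" using a e0 dp by simp
  have D0: "0 \<le> ?D"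
  proof -
    have "ereal (p_succ \<sigma>1 2 ?p ?L M) \<le> ?D" using \<sigma>1 by (rule SUP_upper)
    moreover have "0 \<le> p_succ \<sigma>1 2 ?p ?L M" using psd' \<sigma>1 sub sep e0 by auto
    ultimately show ?thesis by (meson ereal_less_eq(5) order_trans)
  qed
  have Dle: "?D \<le> ereal (?a / (1 + s))"
  proof (rule SUP_least)
    fix \<sigma> assume sF: "\<sigma> \<in> Fk"
    have "(1 + s) * ipf d W (ent \<sigma>) \<le> ipf d W (ent \<rho>)" using sep sF dp by smt
    then have "\<epsilon> * ((1 + s) * ipf d W (ent \<sigma>)) \<le> \<epsilon> * ipf d W (ent \<rho>)" using e0
      by (intro mult_left_mono) auto
    then have "(1 + s) * (\<epsilon> * ipf d W (ent \<sigma>)) \<le> ?a" unfolding a by (simp add: ac_simps)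
    then have "\<epsilon> * ipf d W (ent \<sigma>) \<le> ?a / (1 + s)" using s by (simp add: le_divide_eq algebra_simps)
    then show "ereal (p_succ \<sigma> 2 ?p ?L M) \<le> ereal (?a / (1 + s))" using psd' sF sub by auto
  qed
  have "ereal (1 + s) * ?D \<le> ereal (1 + s) * ereal (?a / (1 + s))"
    using Dle s by (intro ereal_mult_left_mono) auto
  also have "\<dots> = ereal ?a" using s by simp
  finally have le: "ereal (1 + s) * ?D \<le> ereal ?a" .
  have "ereal (1 + s) \<le> ereal ?a / ?D" by (rule ratio_ge[OF apos D0 le]) (use s in simp)
  also have "\<dots> \<le> succ_ratio d Fk \<rho>" unfolding succ_ratio_def
    by (rule Sup_upper) (use povm ens in blast)
  finally show ?thesis .
qed


lemma rob_zero_mat: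
  assumes "\<rho> \<in> carrier_mat d d" "\<tau> \<in> carrier_mat d d"
  shows "complex_of_real (1 / (1 + 0)) \<cdot>\<^sub>m (\<rho> + complex_of_real 0 \<cdot>\<^sub>m \<tau>) = \<rho>"
  by (rule eq_matI) (use assms in auto)

lemma sr_ge_R:
  assumes sub: "Fk \<subseteq> density d" and ne: "Fk \<noteq> {}" and cl: "mat_closed d Fk" and cv: "mat_convex Fk"
    and r: "\<rho> \<in> density d" and nr: "\<rho> \<notin> Fk"
  shows "1 + gen_robustness d Fk \<rho> \<le> succ_ratio d Fk \<rho>"
proof -
  let ?T = "{ereal s | s. 0 \<le> s \<and> (\<exists>\<tau> \<in> density d. complex_of_real (1 / (1 + s)) \<cdot>\<^sub>m (\<rho> + complex_of_real s \<cdot>\<^sub>m \<tau>) \<in> Fk)}"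
  have g: "gen_robustness d Fk \<rho> = Inf ?T" unfolding gen_robustness_def ..
  let ?sr = "succ_ratio d Fk \<rho>"
  have A: "ereal (1 + s) \<le> ?sr" if s: "0 \<le> s" "ereal s < Inf ?T" for s
  proof (rule sr_ge[OF sub ne cl cv r s(1)])
    show "\<not> (\<exists>\<tau>\<in>density d. complex_of_real (1 / (1 + s)) \<cdot>\<^sub>m (\<rho> + complex_of_real s \<cdot>\<^sub>m \<tau>) \<in> Fk)"
    proof
      assume "\<exists>\<tau>\<in>density d. complex_of_real (1 / (1 + s)) \<cdot>\<^sub>m (\<rho> + complex_of_real s \<cdot>\<^sub>m \<tau>) \<in> Fk"
      then have "ereal s \<in> ?T" using s by blast
      then have "Inf ?T \<le> ereal s" by (rule Inf_lower)
      then show False using s(2) by simp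
    qed
  qed
  have B: "ereal 1 \<le> ?sr"
  proof -
    have "ereal (1 + 0) \<le> ?sr"
    proof (rule sr_ge[OF sub ne cl cv r order_refl])
      show "\<not> (\<exists>\<tau>\<in>density d. complex_of_real (1 / (1 + 0)) \<cdot>\<^sub>m (\<rho> + complex_of_real 0 \<cdot>\<^sub>m \<tau>) \<in> Fk)"
        using rob_zero_mat[OF density_carrier[OF r] density_carrier] nr by auto
    qed
    then show ?thesis by simp
  qed
  have T0: "0 \<le> Inf ?T" by (rule Inf_greatest) auto
  show ?thesis unfolding g
  proof (cases "Inf ?T")
    case (real R)
    then have R0: "0 \<le> R" using T0 by simp
    show "1 + Inf ?T \<le> ?sr"
    proof (cases ?sr)
      case (real q)
      have "1 + R \<le> q"
      proof (cases "R = 0")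
        case True then show ?thesis using B real by simp
      next
        case False
        then have "1 < 1 + R" using R0 by simp
        then show ?thesis
        proof (rule dense_le_bounded)
          fix w assume w: "1 < w" "w < 1 + R"
          have "ereal (1 + (w - 1)) \<le> ?sr"
            using A[of "w - 1"] w \<open>Inf ?T = ereal R\<close> by simp
          then show "w \<le> q" using \<open>?sr = ereal q\<close> by simp
        qed
      qed
      then show ?thesis using \<open>Inf ?T = ereal R\<close> real by simp
    next
      case PInf then show ?thesis by simp
    next
      case MInf then show ?thesis using B by simp
    qed
  next
    case PInf
    have "?sr = \<infinity>"
    proof (cases ?sr)
      case (real q)
      have "ereal (1 + max 0 q) \<le> ?sr" using A[of "max 0 q"] PInf by simp
      then show ?thesis using real by simp
    next
      case MInf then show ?thesis using B by simp
    qed simp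
    then show "1 + Inf ?T \<le> ?sr" by simp
  next
    case MInf then show "1 + Inf ?T \<le> ?sr" using T0 by simp
  qed
qed

theorem theorem7:
  fixes d :: nat and K :: "'k set" and F :: "'k \<Rightarrow> complex mat set" and \<rho> :: "complex mat"
  assumes sub: "\<And>k. k \<in> K \<Longrightarrow> F k \<subseteq> density d"
    and ne: "\<And>k. k \<in> K \<Longrightarrow> F k \<noteq> {}"
    and cl: "\<And>k. k \<in> K \<Longrightarrow> mat_closed d (F k)"
    and cv: "\<And>k. k \<in> K \<Longrightarrow> mat_convex (F k)"
    and clU: "mat_closed d (\<Union>k\<in>K. F k)"
    and rho: "\<rho> \<in> density d - (\<Union>k\<in>K. F k)"
  shows "(INF k\<in>K. succ_ratio d (F k) \<rho>) = 1 + gen_robustness d (\<Union>k\<in>K. F k) \<rho>"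
proof -
  have r: "\<rho> \<in> density d" and nr: "\<And>k. k \<in> K \<Longrightarrow> \<rho> \<notin> F k" using rho by auto
  have eq: "succ_ratio d (F k) \<rho> = 1 + gen_robustness d (F k) \<rho>" if k: "k \<in> K" for k
    using sr_le_R[OF sub[OF k] r] sr_ge_R[OF sub[OF k] ne[OF k] cl[OF k] cv[OF k] r nr[OF k]] by simp
  define T where "T k = {ereal s | s. 0 \<le> s \<and> (\<exists>\<tau> \<in> density d. complex_of_real (1 / (1 + s)) \<cdot>\<^sub>m (\<rho> + complex_of_real s \<cdot>\<^sub>m \<tau>) \<in> F k)}" for k
  have gk: "gen_robustness d (F k) \<rho> = Inf (T k)" for k unfolding gen_robustness_def T_def ..
  have gU: "gen_robustness d (\<Union>k\<in>K. F k) \<rho> = Inf (\<Union>k\<in>K. T k)"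
  proof -
    have "{ereal s | s. 0 \<le> s \<and> (\<exists>\<tau> \<in> density d. complex_of_real (1 / (1 + s)) \<cdot>\<^sub>m (\<rho> + complex_of_real s \<cdot>\<^sub>m \<tau>) \<in> (\<Union>k\<in>K. F k))}
        = (\<Union>k\<in>K. T k)" unfolding T_def by blast
    then show ?thesis unfolding gen_robustness_def by simp
  qed
  have IU: "Inf (\<Union>k\<in>K. T k) = (INF k\<in>K. Inf (T k))"
  proof (rule antisym)
    show "Inf (\<Union>k\<in>K. T k) \<le> (INF k\<in>K. Inf (T k))"
      by (rule INF_greatest, rule Inf_superset_mono) auto
    show "(INF k\<in>K. Inf (T k)) \<le> Inf (\<Union>k\<in>K. T k)"
    proof (rule Inf_greatest)
      fix x assume "x \<in> (\<Union>k\<in>K. T k)"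
      then obtain k where k: "k \<in> K" "x \<in> T k" by blast
      have "(INF k\<in>K. Inf (T k)) \<le> Inf (T k)" using k(1) by (rule INF_lower)
      also have "Inf (T k) \<le> x" using k(2) by (rule Inf_lower)
      finally show "(INF k\<in>K. Inf (T k)) \<le> x" .
    qed
  qed
  show ?thesis
  proof (cases "K = {}")
    case True
    then show ?thesis unfolding gU by (simp add: top_ereal_def)
  next
    case False
    have T0: "0 \<le> Inf (T k)" for k by (rule Inf_greatest) (auto simp: T_def)
    have "(INF k\<in>K. succ_ratio d (F k) \<rho>) = (INF k\<in>K. 1 + Inf (T k))"
      using eq gk by (intro INF_cong) auto
    also have "\<dots> = 1 + (INF k\<in>K. Inf (T k))"
      by (rule INF_ereal_add_right[OF False]) (use T0 in auto)
    also have "\<dots> = 1 + gen_robustness d (\<Union>k\<in>K. F k) \<rho>" unfolding gU IU ..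
    finally show ?thesis .
  qed
qed


end
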